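(* $\mathrm{PRT}\subset\mathrm{PRT[O]}\subseteq\mathrm{PRT[T,O]}$ and $\mathrm{PRT}\subset\mathrm{PRT[T]}\subseteq\mathrm{PRT[T,O]}$, where $\subset$ denotes proper inclusion.
   Context: An indexed family is a sequence $\mathcal F=(F_n)_{n\in\mathbb N}$ of subsets of $\mathbb N$ that is uniformly computably enumerable; a set may occur with several indices, and $F\in\mathcal F$ means $F=F_n$ for some $n$. The minimal index $\mathrm{mi}_{\mathcal F}(F)$ is the least $n$ with $F_n=F$. An enumeration of a nonempty set $A$ is an infinite sequence of elements of $A$ in which every element of $A$ occurs; $f\restriction n$ is its initial segment of length $n$, and $\mathrm{content}(\sigma)$ is the set of entries of a finite string $\sigma$. A learner is a partial computable function from finite strings of natural numbers to natural numbers (hypotheses); hypothesis $h$ is interpreted as $F_h$. $M$ converges to a correct index on an enumeration $f$ of $F$ if there is $i$ with $M(f\restriction j)=M(f\restriction i)$ for all $j\ge i$ and $F_{M(f\restriction i)}=F$. $\mathcal F$ is PRT-learnable if there are a learner $M$ and a polynomial $p$ such that for every $F\in\mathcal F$ and every enumeration $f$ of $F$, $M$ converges to a correct index on $f$ in fewer than $p(\mathrm{mi}_{\mathcal F}(F))$ computation steps; if an oracle is used, the number of oracle queries is also bounded by $p(\mathrm{mi}_{\mathcal F}(F))$. A teacher is a computable map $T$ from finite strings to finite strings such that $T(\sigma)$ is a prefix of $T(\tau)$ whenever $\sigma$ is a prefix of $\tau$, and $\mathrm{content}(T(\sigma))\subseteq\mathrm{content}(\sigma)$. $\mathcal F$ is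 PRT[O]-learnable if some learner with access to a membership oracle for the target set PRT-learns it; PRT[T]-learnable if there is a learner-teacher pair $(M,T)$ such that $M$, fed with $T(f\restriction n)$ in place of $f\restriction n$ (i.e. on $T\circ f$), meets the PRT criterion for every enumeration $f$ of every member of $\mathcal F$ (only the learner's computation is counted); PRT[T,O]-learnable if as for PRT[T] but $M$ additionally has a membership oracle for the target and $T$ has access to the oracle answers $M$ receives. PRT, PRT[O], PRT[T], PRT[T,O] denote the classes of indexed families learnable in these senses. *)

theory Defs
  imports Main "HOL-Computational_Algebra.Polynomial" "HOL-Library.Sublist"
begin

text \<open>Tape alphabet: natural numbers, 0 = blank.  Natural numbers are written
  in binary, least significant bit first, with symbol 1 for bit 0 and symbol 2
  for bit 1; symbol 3 terminates a number; symbol 4 is used as a separator.\<close>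

fun bits :: "nat \<Rightarrow> nat list" where
  "bits n = (if n = 0 then [] else (n mod 2 + 1) # bits (n div 2))"

definition enc_str :: "nat list \<Rightarrow> nat list" where
  "enc_str \<sigma> = concat (map (\<lambda>x. bits x @ [3]) \<sigma>)"

text \<open>A machine: finite transition table (state, read symbol) to
  (new state, written symbol, move right?), plus a query state and the two
  answer states.\<close>

record tm =
  delta :: "((nat \<times> nat) \<times> (nat \<times> nat \<times> bool)) list"
  qquery :: nat
  qyes :: nat
  qno :: nat

type_synonym config = "nat \<times> nat \<times> (nat \<Rightarrow> nat)"  (* state, head, tape *)

definition num_at :: "(nat \<Rightarrow> nat) \<Rightarrow> nat \<Rightarrow> nat" where
  "num_at tp p = (let l = (LEAST k. tp (p + k) \<notin> {1, 2})
                  in (\<Sum>k<l. (tp (p + k) - 1) * 2 ^ k))"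

definition init_conf :: "nat list \<Rightarrow> config" where
  "init_conf w = (0, 0, \<lambda>i. if i < length w then w ! i else 0)"

definition step :: "nat set \<Rightarrow> tm \<Rightarrow> config \<Rightarrow> config option" where
  "step A M c = (case c of (q, h, tp) \<Rightarrow>
     if q = qquery M then Some (if num_at tp h \<in> A then qyes M else qno M, h, tp)
     else (case map_of (delta M) (q, tp h) of
             None \<Rightarrow> None
           | Some (q', s, d) \<Rightarrow> Some (q', if d then h + 1 else h - 1, tp(h := s))))"

fun run :: "nat set \<Rightarrow> tm \<Rightarrow> nat \<Rightarrow> config \<Rightarrow> config option" where
  "run A M 0 c = Some c"
| "run A M (Suc n) c = Option.bind (run A M n c) (step A M)"

definition halts_with :: "nat set \<Rightarrow> tm \<Rightarrow> nat list \<Rightarrow> nat \<Rightarrow> config \<Rightarrow> bool" where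
  "halts_with A M w t c \<longleftrightarrow> run A M t (init_conf w) = Some c \<and> step A M c = None"

definition queries :: "nat set \<Rightarrow> tm \<Rightarrow> nat list \<Rightarrow> nat \<Rightarrow> nat list" where
  "queries A M w t =
     concat (map (\<lambda>k. case the (run A M k (init_conf w)) of (q, h, tp) \<Rightarrow>
                        if q = qquery M then [2 * num_at tp h + (if num_at tp h \<in> A then 1 else 0)]
                        else []) [0..<t])"

definition tape_is :: "nat list \<Rightarrow> (nat \<Rightarrow> nat) \<Rightarrow> bool" where
  "tape_is u tp \<longleftrightarrow> (\<forall>i<length u. tp i = u ! i) \<and> tp (length u) = 0"

text \<open>Learner M with oracle A on string \<sigma> outputs hypothesis h using t steps and
  making the queries qs.  (Partial: undefined if M diverges or the final tape
  does not encode a number.)\<close>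
definition lresult :: "nat set \<Rightarrow> tm \<Rightarrow> nat list \<Rightarrow> (nat \<times> nat \<times> nat list) option" where
  "lresult A M \<sigma> =
     (if \<exists>h t c. halts_with A M (enc_str \<sigma>) t c \<and> tape_is (enc_str [h]) (snd (snd c))
      then Some (THE r. \<exists>h t c. r = (h, t, queries A M (enc_str \<sigma>) t) \<and>
                   halts_with A M (enc_str \<sigma>) t c \<and> tape_is (enc_str [h]) (snd (snd c)))
      else None)"

definition computes_str :: "tm \<Rightarrow> nat list \<Rightarrow> nat list \<Rightarrow> bool" where
  "computes_str T w \<tau> \<longleftrightarrow> (\<exists>t c. halts_with {} T w t c \<and> tape_is (enc_str \<tau>) (snd (snd c)))"

definition str_out :: "tm \<Rightarrow> nat list \<Rightarrow> nat list" where
  "str_out T w = (THE \<tau>. computes_str T w \<tau>)"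

definition indexed_family :: "(nat \<Rightarrow> nat set) \<Rightarrow> bool" where
  "indexed_family F \<longleftrightarrow> (\<exists>E. \<forall>n x. x \<in> F n \<longleftrightarrow> (\<exists>t c. halts_with {} E (enc_str [n, x]) t c))"

definition mi :: "(nat \<Rightarrow> nat set) \<Rightarrow> nat set \<Rightarrow> nat" where
  "mi F A = (LEAST n. F n = A)"

definition is_enum :: "(nat \<Rightarrow> nat) \<Rightarrow> nat set \<Rightarrow> bool" where
  "is_enum f A \<longleftrightarrow> range f = A"

definition prefix_of :: "(nat \<Rightarrow> nat) \<Rightarrow> nat \<Rightarrow> nat list" where
  "prefix_of f n = map f [0..<n]"

definition prt_conv :: "(nat \<Rightarrow> nat set) \<Rightarrow> nat set \<Rightarrow> nat poly \<Rightarrow>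
                        (nat \<Rightarrow> (nat \<times> nat \<times> nat list) option) \<Rightarrow> bool" where
  "prt_conv F A p res \<longleftrightarrow> (\<exists>i.
     (\<forall>j\<le>i. res j \<noteq> None) \<and>
     (\<forall>j\<ge>i. res j \<noteq> None \<and> fst (the (res j)) = fst (the (res i))) \<and>
     F (fst (the (res i))) = A \<and>
     (\<Sum>j\<le>i. fst (snd (the (res j)))) < poly p (mi F A) \<and>
     (\<Sum>j\<le>i. length (snd (snd (the (res j))))) \<le> poly p (mi F A))"

definition teacher :: "tm \<Rightarrow> bool" where
  "teacher T \<longleftrightarrow>
     (\<forall>\<sigma>. \<exists>\<tau>. computes_str T (enc_str \<sigma>) \<tau>) \<and>
     (\<forall>\<sigma> \<sigma>'. prefix \<sigma> \<sigma>' \<longrightarrow> prefix (str_out T (enc_str \<sigma>)) (str_out T (enc_str \<sigma>'))) \<and>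
     (\<forall>\<sigma>. set (str_out T (enc_str \<sigma>)) \<subseteq> set \<sigma>)"

text \<open>Teacher with access to the oracle answers received by the learner: input
  is the data string \<sigma> and the log L of (coded) queries and answers.\<close>
definition teach_in :: "nat list \<Rightarrow> nat list \<Rightarrow> nat list" where
  "teach_in \<sigma> L = enc_str \<sigma> @ [4] @ enc_str L"

definition teacherO :: "tm \<Rightarrow> bool" where
  "teacherO T \<longleftrightarrow>
     (\<forall>\<sigma> L. \<exists>\<tau>. computes_str T (teach_in \<sigma> L) \<tau>) \<and>
     (\<forall>\<sigma> \<sigma>' L L'. prefix \<sigma> \<sigma>' \<longrightarrow> prefix L L' \<longrightarrow>
        prefix (str_out T (teach_in \<sigma> L)) (str_out T (teach_in \<sigma>' L'))) \<and>
     (\<forall>\<sigma> L. set (str_out T (teach_in \<sigma> L)) \<subseteq> set \<sigma>)"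

fun tolog :: "tm \<Rightarrow> tm \<Rightarrow> nat set \<Rightarrow> (nat \<Rightarrow> nat) \<Rightarrow> nat \<Rightarrow> nat list option" where
  "tolog M T A f 0 = Some []"
| "tolog M T A f (Suc n) =
     (case tolog M T A f n of None \<Rightarrow> None
      | Some L \<Rightarrow> (case lresult A M (str_out T (teach_in (prefix_of f n) L)) of
                     None \<Rightarrow> None
                   | Some (h, t, qs) \<Rightarrow> Some (L @ qs)))"

definition to_res :: "tm \<Rightarrow> tm \<Rightarrow> nat set \<Rightarrow> (nat \<Rightarrow> nat) \<Rightarrow> nat \<Rightarrow> (nat \<times> nat \<times> nat list) option" where
  "to_res M T A f n = (case tolog M T A f n of None \<Rightarrow> None
                        | Some L \<Rightarrow> lresult A M (str_out T (teach_in (prefix_of f n) L)))"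

definition PRT :: "(nat \<Rightarrow> nat set) set" where
  "PRT = {F. indexed_family F \<and> (\<exists>M p. \<forall>A\<in>range F. \<forall>f. is_enum f A \<longrightarrow>
            prt_conv F A p (\<lambda>n. lresult {} M (prefix_of f n)))}"

definition PRT_O :: "(nat \<Rightarrow> nat set) set" where
  "PRT_O = {F. indexed_family F \<and> (\<exists>M p. \<forall>A\<in>range F. \<forall>f. is_enum f A \<longrightarrow>
            prt_conv F A p (\<lambda>n. lresult A M (prefix_of f n)))}"

definition PRT_T :: "(nat \<Rightarrow> nat set) set" where
  "PRT_T = {F. indexed_family F \<and> (\<exists>M T p. teacher T \<and> (\<forall>A\<in>range F. \<forall>f. is_enum f A \<longrightarrow>
            prt_conv F A p (\<lambda>n. lresult {} M (str_out T (enc_str (prefix_of f n))))))}"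

definition PRT_TO :: "(nat \<Rightarrow> nat set) set" where
  "PRT_TO = {F. indexed_family F \<and> (\<exists>M T p. teacherO T \<and> (\<forall>A\<in>range F. \<forall>f. is_enum f A \<longrightarrow>
            prt_conv F A p (to_res M T A f)))}"

end

theory Submission
  imports Defs
begin



declare bits.simps[simp del]

lemma bits_0[simp]: "bits 0 = []" by (simp add: bits.simps)
lemma bits_nz: "n \<noteq> 0 \<Longrightarrow> bits n = (n mod 2 + 1) # bits (n div 2)"
  by (subst bits.simps) simp

lemma set_bits: "set (bits n) \<subseteq> {1,2}"
proof (induction n rule: bits.induct)
  case (1 n) then show ?case
    by (cases "n = 0") (auto simp: bits_nz)
qed

lemma bits_inj: "bits n = bits m \<Longrightarrow> n = m"
proof (induction n arbitrary: m rule: bits.induct)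
  case (1 n)
  show ?case
  proof (cases "n = 0")
    case True then show ?thesis using 1(2)
      by (cases "m = 0") (auto simp: bits_nz)
  next
    case False
    then have m0: "m \<noteq> 0" using 1(2) by (cases "m=0") (auto simp: bits_nz)
    from 1(2) False m0 have "n mod 2 = m mod 2" "bits (n div 2) = bits (m div 2)"
      by (auto simp: bits_nz)
    with 1(1)[OF False] have "n div 2 = m div 2" by blast
    with \<open>n mod 2 = m mod 2\<close> show ?thesis by (metis div_mult_mod_eq)
  qed
qed

lemma enc_str_Nil[simp]: "enc_str [] = []" by (simp add: enc_str_def)
lemma enc_str_Cons: "enc_str (x # xs) = bits x @ 3 # enc_str xs" by (simp add: enc_str_def)
lemma enc_str_append: "enc_str (xs @ ys) = enc_str xs @ enc_str ys" by (simp add: enc_str_def)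
lemma enc_str_single: "enc_str [h] = bits h @ [3]" by (simp add: enc_str_def)

lemma set_enc_str: "set (enc_str xs) \<subseteq> {1,2,3}"
  using set_bits by (induction xs) (auto simp: enc_str_Cons)

lemma split3: "a @ (3::nat) # r = b @ 3 # s \<Longrightarrow> 3 \<notin> set a \<Longrightarrow> 3 \<notin> set b \<Longrightarrow> a = b \<and> r = s"
proof (induction a arbitrary: b)
  case Nil then show ?case by (cases b) auto
next
  case (Cons x a) then show ?case by (cases b) auto
qed

lemma three_notin_bits: "3 \<notin> set (bits n)" using set_bits by fastforce

lemma enc_str_inj: "enc_str xs = enc_str ys \<Longrightarrow> xs = ys"
proof (induction xs arbitrary: ys)
  case Nil then show ?case by (cases ys) (auto simp: enc_str_Cons)
next
  case (Cons x xs)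
  then obtain y ys' where ys: "ys = y # ys'" by (cases ys) (auto simp: enc_str_Cons)
  from Cons(2) ys have "bits x = bits y \<and> enc_str xs = enc_str ys'"
    by (intro split3) (auto simp: enc_str_Cons three_notin_bits)
  then show ?case using Cons(1) ys bits_inj by blast
qed

lemma tape_is_unique: "tape_is u tp \<Longrightarrow> tape_is v tp \<Longrightarrow> 0 \<notin> set u \<Longrightarrow> 0 \<notin> set v \<Longrightarrow> u = v"
proof -
  assume a: "tape_is u tp" "tape_is v tp" "0 \<notin> set u" "0 \<notin> set v"
  have "length u = length v"
  proof (rule ccontr)
    assume "length u \<noteq> length v"
    then consider "length u < length v" | "length v < length u" by linarith
    then show False
    proof cases
      case 1 then have "tp (length u) = v ! length u" using a(2) by (simp add: tape_is_def)
      moreover have "tp (length u) = 0" using a(1) by (simp add: tape_is_def)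
      ultimately show False using a(4) 1 by (metis nth_mem)
    next
      case 2 then have "tp (length v) = u ! length v" using a(1) by (simp add: tape_is_def)
      moreover have "tp (length v) = 0" using a(2) by (simp add: tape_is_def)
      ultimately show False using a(3) 2 by (metis nth_mem)
    qed
  qed
  then show ?thesis using a by (auto simp: tape_is_def intro: nth_equalityI)
qed

lemma zero_notin_enc: "0 \<notin> set (enc_str xs)" using set_enc_str by fastforce

lemma tape_is_enc_unique: "tape_is (enc_str xs) tp \<Longrightarrow> tape_is (enc_str ys) tp \<Longrightarrow> xs = ys"
  using tape_is_unique zero_notin_enc enc_str_inj by blast

lemma run_add: "run A M (m + n) c = Option.bind (run A M m c) (run A M n)"
  by (induction n) auto

lemma run_Suc': "run A M (Suc n) c = Option.bind (step A M c) (run A M n)"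
proof -
  have "run A M (Suc 0 + n) c = Option.bind (run A M (Suc 0) c) (run A M n)" by (rule run_add)
  moreover have "run A M (Suc 0) c = step A M c" by (simp only: run.simps Option.bind.simps) 
  ultimately show ?thesis by (simp only: plus_nat.simps)
qed
lemma run_step: "step A M c = Some c' \<Longrightarrow> run A M (Suc n) c = run A M n c'"
  unfolding run_Suc' by simp
lemma run_after_halt: "run A M t c0 = Some c \<Longrightarrow> step A M c = None \<Longrightarrow> t < t' \<Longrightarrow> run A M t' c0 = None"
proof -
  assume a: "run A M t c0 = Some c" "step A M c = None" "t < t'"
  obtain k where "t' = Suc (t + k)" using less_imp_Suc_add[OF a(3)] by blast
  then have k: "t' = t + Suc k" by simp
  have "run A M t' c0 = Option.bind (run A M t c0) (run A M (Suc k))" unfolding k by (rule run_add)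
  also have "\<dots> = run A M (Suc k) c" using a(1) by simp
  also have "\<dots> = None" unfolding run_Suc' using a(2) by simp
  finally show ?thesis .
qed

lemma halts_det: "halts_with A M w t c \<Longrightarrow> halts_with A M w t' c' \<Longrightarrow> t = t' \<and> c = c'"
proof -
  assume a: "halts_with A M w t c" "halts_with A M w t' c'"
  have "\<not> t < t'"
  proof
    assume "t < t'"
    with a run_after_halt[of A M t "init_conf w" c t'] show False unfolding halts_with_def by simp
  qed
  moreover have "\<not> t' < t"
  proof
    assume "t' < t"
    with a run_after_halt[of A M t' "init_conf w" c' t] show False unfolding halts_with_def by simp
  qed
  ultimately have "t = t'" by simp
  then show ?thesis using a by (simp add: halts_with_def)
qed

lemma lresult_eq:
  assumes "halts_with A M (enc_str \<sigma>) t c" "tape_is (enc_str [h]) (snd (snd c))"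
  shows "lresult A M \<sigma> = Some (h, t, queries A M (enc_str \<sigma>) t)"
proof -
  have "(THE r. \<exists>h t c. r = (h, t, queries A M (enc_str \<sigma>) t) \<and>
                   halts_with A M (enc_str \<sigma>) t c \<and> tape_is (enc_str [h]) (snd (snd c)))
        = (h, t, queries A M (enc_str \<sigma>) t)"
  proof (rule the_equality)
    show "\<exists>h' t' c'. (h, t, queries A M (enc_str \<sigma>) t) = (h', t', queries A M (enc_str \<sigma>) t') \<and>
                   halts_with A M (enc_str \<sigma>) t' c' \<and> tape_is (enc_str [h']) (snd (snd c'))"
      using assms by blast
  next
    fix r assume "\<exists>h' t' c'. r = (h', t', queries A M (enc_str \<sigma>) t') \<and>
                   halts_with A M (enc_str \<sigma>) t' c' \<and> tape_is (enc_str [h']) (snd (snd c'))"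
    then obtain h' t' c' where r: "r = (h', t', queries A M (enc_str \<sigma>) t')"
       "halts_with A M (enc_str \<sigma>) t' c'" "tape_is (enc_str [h']) (snd (snd c'))" by blast
    from halts_det[OF assms(1) r(2)] have "t = t'" "c = c'" by auto
    with r(3) assms(2) have "[h] = [h']" using tape_is_enc_unique by blast
    then show "r = (h, t, queries A M (enc_str \<sigma>) t)" using r(1) \<open>t = t'\<close> by simp
  qed
  moreover have ex: "\<exists>h t c. halts_with A M (enc_str \<sigma>) t c \<and> tape_is (enc_str [h]) (snd (snd c))"
    using assms by blast
  ultimately show ?thesis unfolding lresult_def by (subst if_P[OF ex]) simp
qed

lemma lresult_Some:
  assumes "lresult A M \<sigma> = Some r"
  shows "\<exists>h t c. r = (h, t, queries A M (enc_str \<sigma>) t) \<and> halts_with A M (enc_str \<sigma>) t c \<and>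
                 tape_is (enc_str [h]) (snd (snd c))"
proof -
  have "\<exists>h t c. halts_with A M (enc_str \<sigma>) t c \<and> tape_is (enc_str [h]) (snd (snd c))"
  proof (rule ccontr)
    assume "\<not> ?thesis"
    then have "lresult A M \<sigma> = None" unfolding lresult_def by (simp only: if_False)
    with assms show False by simp
  qed
  then obtain h t c where hc: "halts_with A M (enc_str \<sigma>) t c" "tape_is (enc_str [h]) (snd (snd c))" by blast
  with lresult_eq[OF hc] assms have "r = (h, t, queries A M (enc_str \<sigma>) t)" by simp
  with hc show ?thesis by blast
qed

lemma computes_str_unique: "computes_str T w \<tau> \<Longrightarrow> computes_str T w \<tau>' \<Longrightarrow> \<tau> = \<tau>'"
proof -
  assume a: "computes_str T w \<tau>" "computes_str T w \<tau>'"
  then obtain t c t' c' where h: "halts_with {} T w t c" "tape_is (enc_str \<tau>) (snd (snd c))"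
     "halts_with {} T w t' c'" "tape_is (enc_str \<tau>') (snd (snd c'))" unfolding computes_str_def by blast
  from halts_det[OF h(1) h(3)] have "c = c'" by simp
  with h(2,4) show ?thesis using tape_is_enc_unique by blast
qed

lemma str_out_eq: "computes_str T w \<tau> \<Longrightarrow> str_out T w = \<tau>"
  unfolding str_out_def using computes_str_unique by blast

lemma length_queries: "length (queries A M w t) \<le> t"
proof (induction t)
  case 0 then show ?case by (simp add: queries_def)
next
  case (Suc t)
  have "queries A M w (Suc t) = queries A M w t @ (case the (run A M t (init_conf w)) of (q, h, tp) \<Rightarrow>
                        if q = qquery M then [2 * num_at tp h + (if num_at tp h \<in> A then 1 else 0)]
                        else [])" by (simp add: queries_def)
  then show ?case using Suc by (auto split: prod.splits)
qed




lemmas run_Suc_last = run.simps(2)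
declare run.simps(2)[simp del]

lemma step_tr: "q \<noteq> qquery M \<Longrightarrow> map_of (delta M) (q, tp h) = Some (q', s, d) \<Longrightarrow>
  step A M (q, h, tp) = Some (q', if d then h + 1 else h - 1, tp(h := s))"
  by (simp add: step_def)

lemma step_none: "q \<noteq> qquery M \<Longrightarrow> map_of (delta M) (q, tp h) = None \<Longrightarrow> step A M (q, h, tp) = None"
  by (simp add: step_def)

lemma rscan:
  assumes "q \<noteq> qquery M" "\<forall>s\<in>S. map_of (delta M) (q, s) = Some (q, g s, True)"
    "\<forall>i<m. tp (p + i) \<in> S"
  shows "run A M m (q, p, tp) = Some (q, p + m, \<lambda>i. if p \<le> i \<and> i < p + m then g (tp i) else tp i)"
  using assms(3)
proof (induction m)
  case 0 then show ?case by (simp add: fun_eq_iff)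
next
  case (Suc m)
  then have IH: "run A M m (q, p, tp) = Some (q, p + m, \<lambda>i. if p \<le> i \<and> i < p + m then g (tp i) else tp i)"
    by simp
  have S: "tp (p + m) \<in> S" using Suc(2) by simp
  have "step A M (q, p + m, \<lambda>i. if p \<le> i \<and> i < p + m then g (tp i) else tp i)
      = Some (q, p + Suc m, \<lambda>i. if p \<le> i \<and> i < p + Suc m then g (tp i) else tp i)"
    by (subst step_tr[OF assms(1)]) (use assms(2) S in \<open>auto intro!: ext\<close>)
  then show ?case using IH by (simp add: run_Suc_last)
qed

lemma lscan:
  assumes "q \<noteq> qquery M" "\<forall>s\<in>S. map_of (delta M) (q, s) = Some (q, g s, False)"
    "\<forall>i. p < i \<and> i \<le> p + m \<longrightarrow> tp i \<in> S"
  shows "run A M m (q, p + m, tp) = Some (q, p, \<lambda>i. if p < i \<and> i \<le> p + m then g (tp i) else tp i)"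
  using assms(3)
proof (induction m arbitrary: tp)
  case 0 then show ?case by (simp add: fun_eq_iff)
next
  case (Suc m)
  have S: "tp (p + Suc m) \<in> S" using Suc(2) by simp
  have st: "step A M (q, p + Suc m, tp) = Some (q, p + m, tp(p + Suc m := g (tp (p + Suc m))))"
    by (subst step_tr[OF assms(1)]) (use assms(2) S in auto)
  have "run A M m (q, p + m, tp(p + Suc m := g (tp (p + Suc m)))) =
     Some (q, p, \<lambda>i. if p < i \<and> i \<le> p + m then g ((tp(p + Suc m := g (tp (p + Suc m)))) i)
                       else (tp(p + Suc m := g (tp (p + Suc m)))) i)"
    by (rule Suc.IH) (use Suc(2) in auto)
  also have "(\<lambda>i. if p < i \<and> i \<le> p + m then g ((tp(p + Suc m := g (tp (p + Suc m)))) i)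
                       else (tp(p + Suc m := g (tp (p + Suc m)))) i) =
     (\<lambda>i. if p < i \<and> i \<le> p + Suc m then g (tp i) else tp i)"
    by (auto intro!: ext)
  finally have X: "run A M m (q, p + m, tp(p + Suc m := g (tp (p + Suc m)))) =
     Some (q, p, \<lambda>i. if p < i \<and> i \<le> p + Suc m then g (tp i) else tp i)" .
  show ?case by (simp only: run_step[OF st] X)
qed

lemma ascan:
  assumes "a \<noteq> qquery M" "b \<noteq> qquery M"
    "\<forall>s\<in>S. map_of (delta M) (a, s) = Some (b, s, True)"
    "\<forall>s\<in>S. map_of (delta M) (b, s) = Some (a, s, True)"
    "\<forall>i<m. tp (p + i) \<in> S"
  shows "run A M m (a, p, tp) = Some (if even m then a else b, p + m, tp)"
  using assms(5)
proof (induction m)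
  case 0 then show ?case by simp
next
  case (Suc m)
  then have IH: "run A M m (a, p, tp) = Some (if even m then a else b, p + m, tp)" by simp
  have S: "tp (p + m) \<in> S" using Suc(2) by simp
  have "step A M (if even m then a else b, p + m, tp) = Some (if even (Suc m) then a else b, p + Suc m, tp)"
  proof (cases "even m")
    case True
    have "step A M (a, p + m, tp) = Some (b, p + Suc m, tp)"
      by (subst step_tr[OF assms(1)]) (use assms(3) S in auto)
    then show ?thesis using True by simp
  next
    case False
    have "step A M (b, p + m, tp) = Some (a, p + Suc m, tp)"
      by (subst step_tr[OF assms(2)]) (use assms(4) S in auto)
    then show ?thesis using False by simp
  qed
  then show ?case using IH by (simp add: run_Suc_last)
qed




lemma map_of_app_None: "map_of xs k = None \<Longrightarrow> map_of (xs @ ys) k = map_of ys k"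
  by (simp add: map_add_def split: option.splits)
lemma map_of_app_Some: "map_of xs k = Some v \<Longrightarrow> map_of (xs @ ys) k = Some v"
  by (simp add: map_add_def split: option.splits)

lemma map_of_row: "map_of (map (\<lambda>s. ((a, s), f s)) xs) (b, s0) = (if a = b \<and> s0 \<in> set xs then Some (f s0) else None)"
  by (induction xs) auto

definition dq_states :: "tm \<Rightarrow> nat set" where
  "dq_states M = {0, qquery M, qyes M, qno M} \<union> (\<lambda>((q,s),(q',s',d)). q) ` set (delta M)
                 \<union> (\<lambda>((q,s),(q',s',d)). q') ` set (delta M)"
definition dq_syms :: "tm \<Rightarrow> nat set" where
  "dq_syms M = {0,1,2,3} \<union> (\<lambda>((q,s),(q',s',d)). s') ` set (delta M)"
definition dqQ :: "tm \<Rightarrow> nat" where "dqQ M = Suc (Max (dq_states M))"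
definition dqB :: "tm \<Rightarrow> nat" where "dqB M = Suc (Max (dq_syms M))"

definition dq :: "tm \<Rightarrow> tm" where
  "dq M = \<lparr>delta = map (\<lambda>s. ((qquery M, s), (dqQ M, s, True))) [0..<dqB M]
                  @ map (\<lambda>s. ((dqQ M, s), (qno M, s, False))) [0..<dqB M] @ delta M,
           qquery = Suc (dqQ M), qyes = qyes M, qno = qno M\<rparr>"

definition dq_inv :: "tm \<Rightarrow> config \<Rightarrow> bool" where
  "dq_inv M c = (case c of (q, h, tp) \<Rightarrow> q \<in> dq_states M \<and> (\<forall>i. tp i < dqB M))"

lemma fin_states: "finite (dq_states M)" by (simp add: dq_states_def)
lemma fin_syms: "finite (dq_syms M)" by (simp add: dq_syms_def)

lemma state_lt: "q \<in> dq_states M \<Longrightarrow> q < dqQ M"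
  unfolding dqQ_def using fin_states Max_ge by (simp add: le_imp_less_Suc)
lemma sym_lt: "s \<in> dq_syms M \<Longrightarrow> s < dqB M"
  unfolding dqB_def using fin_syms Max_ge by (simp add: le_imp_less_Suc)

lemma target_in: "map_of (delta M) k = Some (q', s', d) \<Longrightarrow> q' \<in> dq_states M \<and> s' \<in> dq_syms M"
proof -
  assume "map_of (delta M) k = Some (q', s', d)"
  then have "(k, (q', s', d)) \<in> set (delta M)" by (rule map_of_SomeD)
  then show ?thesis unfolding dq_states_def dq_syms_def by force
qed

lemma dq_fields[simp]: "qquery (dq M) = Suc (dqQ M)" "qyes (dq M) = qyes M" "qno (dq M) = qno M"
  by (simp_all add: dq_def)

lemma qquery_ne: "qquery M \<noteq> dqQ M"
  using state_lt[of "qquery M" M] by (auto simp: dq_states_def)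

lemma dq_map: "map_of (delta (dq M)) (q, s) = (if q = qquery M \<and> s < dqB M then Some (dqQ M, s, True)
    else if q = dqQ M \<and> s < dqB M then Some (qno M, s, False) else map_of (delta M) (q, s))"
proof -
  have "map_of (delta (dq M)) (q, s) = (map_of (delta M) ++ map_of (map (\<lambda>s. ((dqQ M, s), qno M, s, False)) [0..<dqB M])
     ++ map_of (map (\<lambda>s. ((qquery M, s), (dqQ M, s, True))) [0..<dqB M])) (q, s)"
    by (simp add: dq_def)
  then show ?thesis using qquery_ne[of M] by (simp add: map_add_def map_of_row split: option.splits)
qed

lemma dq_map_other: "q \<noteq> qquery M \<Longrightarrow> q \<noteq> dqQ M \<Longrightarrow> map_of (delta (dq M)) (q, s) = map_of (delta M) (q, s)"
  by (simp add: dq_map)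

lemma dq_step_none:
  assumes "dq_inv M c" "step {} M c = None"
  shows "step A (dq M) c = None"
proof -
  obtain q h tp where c: "c = (q, h, tp)" by (cases c) auto
  from assms c have q: "q \<in> dq_states M" by (simp add: dq_inv_def)
  from assms(2) c have nq: "q \<noteq> qquery M" and mo: "map_of (delta M) (q, tp h) = None"
    by (auto simp: step_def split: if_splits option.splits)
  have "q \<noteq> dqQ M" "q \<noteq> Suc (dqQ M)" using state_lt[OF q] by auto
  then show ?thesis using c nq mo dq_map_other[of q M "tp h"] by (simp add: step_def)
qed

lemma dq_step_some:
  assumes "dq_inv M c" "step {} M c = Some c'"
  shows "dq_inv M c' \<and> (run A (dq M) 1 c = Some c' \<or> run A (dq M) 2 c = Some c')"
proof -
  obtain q h tp where c: "c = (q, h, tp)" by (cases c) auto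
  from assms c have q: "q \<in> dq_states M" and sy: "\<forall>i. tp i < dqB M" by (auto simp: dq_inv_def)
  have ne: "q \<noteq> dqQ M" "q \<noteq> Suc (dqQ M)" using state_lt[OF q] by auto
  show ?thesis
  proof (cases "q = qquery M")
    case True
    then have c': "c' = (qno M, h, tp)" using assms(2) c by (simp add: step_def)
    have inv: "dq_inv M c'" using c' sy by (simp add: dq_inv_def dq_states_def)
    have m1: "map_of (delta (dq M)) (q, tp h) = Some (dqQ M, tp h, True)"
      using True sy[rule_format, of h] by (simp add: dq_map)
    have s1: "step A (dq M) (q, h, tp) = Some (dqQ M, h + 1, tp)"
      using step_tr[of q "dq M" tp h "dqQ M" "tp h" True A, OF _ m1] ne by simp
    have nq2: "qquery M \<noteq> dqQ M" using state_lt[of "qquery M" M] by (auto simp: dq_states_def)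
    have m2: "map_of (delta (dq M)) (dqQ M, tp (h+1)) = Some (qno M, tp (h+1), False)"
      using nq2 sy[rule_format, of "h+1"] by (simp add: dq_map)
    have s2: "step A (dq M) (dqQ M, h + 1, tp) = Some (qno M, h, tp)"
      using step_tr[of "dqQ M" "dq M" tp "h+1" "qno M" "tp (h+1)" False A, OF _ m2] by simp
    have "run A (dq M) 2 c = Some c'"
      using s1 s2 c c' by (simp add: numeral_2_eq_2 run_step)
    then show ?thesis using inv by simp
  next
    case False
    then obtain q' s d where mo: "map_of (delta M) (q, tp h) = Some (q', s, d)"
      and c': "c' = (q', if d then h + 1 else h - 1, tp(h := s))"
      using assms(2) c by (auto simp: step_def split: option.splits)
    have inv: "dq_inv M c'" using c' sy target_in[OF mo] sym_lt by (simp add: dq_inv_def)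
    have "step A (dq M) c = Some c'"
      using c c' step_tr[of q "dq M" tp h q' s d A] ne False mo dq_map_other[of q M "tp h"]
      by simp
    then have "run A (dq M) 1 c = Some c'" by (simp add: run_step)
    then show ?thesis using inv by simp
  qed
qed

lemma dq_run:
  assumes "dq_inv M c0"
  shows "run {} M n c0 = Some c \<Longrightarrow> \<exists>n'\<le>2*n. run A (dq M) n' c0 = Some c \<and> dq_inv M c"
proof (induction n arbitrary: c)
  case 0 then show ?case using assms by simp
next
  case (Suc n)
  from Suc.prems have b: "Option.bind (run {} M n c0) (step {} M) = Some c" by (simp only: run_Suc_last)
  then obtain c1 where r1: "run {} M n c0 = Some c1" and s1: "step {} M c1 = Some c"
    by (cases "run {} M n c0") auto
  from Suc.IH[OF r1] obtain n1 where n1: "n1 \<le> 2*n" "run A (dq M) n1 c0 = Some c1" "dq_inv M c1" by blast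
  have "\<exists>k. k \<le> 2 \<and> run A (dq M) k c1 = Some c \<and> dq_inv M c"
  proof -
    have d: "dq_inv M c" "run A (dq M) 1 c1 = Some c \<or> run A (dq M) 2 c1 = Some c"
      using dq_step_some[OF n1(3) s1, of A] by auto
    from d(2) show ?thesis
    proof
      assume "run A (dq M) 1 c1 = Some c" then show ?thesis using d(1) by (intro exI[of _ 1]) simp
    next
      assume "run A (dq M) 2 c1 = Some c" then show ?thesis using d(1) by (intro exI[of _ 2]) simp
    qed
  qed
  then obtain k where k: "k \<le> 2" "run A (dq M) k c1 = Some c" "dq_inv M c" by blast
  have "run A (dq M) (n1 + k) c0 = Option.bind (run A (dq M) n1 c0) (run A (dq M) k)" by (rule run_add)
  then have "run A (dq M) (n1 + k) c0 = Some c" using n1(2) k(2) by simp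
  moreover have "n1 + k \<le> 2 * Suc n" using n1(1) k(1) by simp
  ultimately show ?case using k(3) by blast
qed

lemma small_sym: "x \<in> {0,1,2,3} \<Longrightarrow> x \<in> dq_syms M"
  unfolding dq_syms_def by (rule UnI1)

lemma zero_state: "0 \<in> dq_states M"
  unfolding dq_states_def by (rule UnI1, rule UnI1) simp

lemma enc_nth: "i < length (enc_str \<sigma>) \<Longrightarrow> enc_str \<sigma> ! i \<in> {1,2,3}"
proof -
  assume "i < length (enc_str \<sigma>)"
  then have "enc_str \<sigma> ! i \<in> set (enc_str \<sigma>)" by (rule nth_mem)
  with set_enc_str[of \<sigma>] show ?thesis by (rule subsetD)
qed

lemma dq_init: "dq_inv M (init_conf (enc_str \<sigma>))"
proof -
  have "\<forall>i. (if i < length (enc_str \<sigma>) then enc_str \<sigma> ! i else 0) < dqB M"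
  proof
    fix i
    have "(if i < length (enc_str \<sigma>) then enc_str \<sigma> ! i else 0) \<in> {0,1,2,3}"
      using enc_nth[of i \<sigma>] by auto
    then show "(if i < length (enc_str \<sigma>) then enc_str \<sigma> ! i else 0) < dqB M"
      by (intro sym_lt small_sym)
  qed
  then show ?thesis using zero_state[of M] unfolding dq_inv_def init_conf_def by simp
qed

lemma dq_lresult:
  assumes "lresult {} M \<sigma> = Some (h, t, qs)"
  shows "\<exists>t' qs'. t' \<le> 2 * t \<and> lresult A (dq M) \<sigma> = Some (h, t', qs')"
proof -
  from lresult_Some[OF assms] obtain c where hc: "halts_with {} M (enc_str \<sigma>) t c"
    "tape_is (enc_str [h]) (snd (snd c))" by blast
  from hc(1) have r: "run {} M t (init_conf (enc_str \<sigma>)) = Some c" and s: "step {} M c = None"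
    unfolding halts_with_def by blast+
  from dq_run[OF dq_init r, of A] obtain t' where t': "t' \<le> 2*t"
    "run A (dq M) t' (init_conf (enc_str \<sigma>)) = Some c" "dq_inv M c" by blast
  have "halts_with A (dq M) (enc_str \<sigma>) t' c"
    using t' dq_step_none[OF t'(3) s] by (simp add: halts_with_def)
  from lresult_eq[OF this hc(2)] have "lresult A (dq M) \<sigma> = Some (h, t', queries A (dq M) (enc_str \<sigma>) t')" .
  with t'(1) show ?thesis by blast
qed




lemma run_trans: "run A M a c = Some c1 \<Longrightarrow> run A M b c1 = Some c2 \<Longrightarrow> run A M (a + b) c = Some c2"
  by (simp add: run_add)

lemma run_one: "step A M c = Some c1 \<Longrightarrow> run A M 1 c = Some c1"
  by (simp add: run_step)

definition wpre :: "((nat \<times> nat) \<times> (nat \<times> nat \<times> bool)) list" where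
  "wpre = [((0,4),(2,5,True)), ((0,1),(1,6,True)), ((0,2),(1,7,True)), ((0,3),(1,8,True)),
        ((1,1),(1,1,True)), ((1,2),(1,2,True)), ((1,3),(1,3,True)), ((1,4),(2,0,True)),
        ((2,1),(2,0,True)), ((2,2),(2,0,True)), ((2,3),(2,0,True)), ((2,0),(3,0,False)),
        ((3,0),(3,0,False)), ((3,1),(3,1,False)), ((3,2),(3,2,False)), ((3,3),(3,3,False)),
        ((3,5),(4,0,True)), ((3,6),(4,1,True)), ((3,7),(4,2,True)), ((3,8),(4,3,True)),
        ((4,0),(5,0,False)), ((4,1),(5,1,False)), ((4,2),(5,2,False)), ((4,3),(5,3,False))]"

definition shd :: "((nat \<times> nat) \<times> (nat \<times> nat \<times> bool)) \<Rightarrow> ((nat \<times> nat) \<times> (nat \<times> nat \<times> bool))" where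
  "shd e = (case e of ((q,s),(q',s',d)) \<Rightarrow> ((q+5,s),(q'+5,s',d)))"

definition wr :: "tm \<Rightarrow> tm" where
  "wr T = \<lparr>delta = wpre @ map shd (delta T), qquery = qquery T + 5, qyes = qyes T + 5, qno = qno T + 5\<rparr>"

lemma wr_fields[simp]: "qquery (wr T) = qquery T + 5" "qyes (wr T) = qyes T + 5" "qno (wr T) = qno T + 5"
  by (simp_all add: wr_def)

lemma map_of_shd: "map_of (map shd ds) (q + 5, s) = map_option (\<lambda>(q',s',d). (q'+5, s', d)) (map_of ds (q, s))"
  by (induction ds) (auto simp: shd_def split: prod.splits)

lemma map_of_shd_low: "q < 5 \<Longrightarrow> map_of (map shd ds) (q, s) = None"
  by (induction ds) (auto simp: shd_def split: prod.splits)

lemma wpre_high: "map_of wpre (q + 5, s) = None"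
  by (simp add: wpre_def)

lemma wr_map_low: "q < 5 \<Longrightarrow> map_of (delta (wr T)) (q, s) = map_of wpre (q, s)"
  by (simp add: wr_def map_add_def map_of_shd_low split: option.splits)

lemma wr_map_high: "map_of (delta (wr T)) (q + 5, s) = map_option (\<lambda>(q',s',d). (q'+5, s', d)) (map_of (delta T) (q, s))"
  using wpre_high[of q s] by (simp add: wr_def map_add_def map_of_shd split: option.splits)

definition sh :: "config \<Rightarrow> config" where "sh c = (case c of (q, h, tp) \<Rightarrow> (q + 5, h, tp))"

lemma wr_step: "step A (wr T) (sh c) = map_option sh (step A T c)"
proof -
  obtain q h tp where c: "c = (q, h, tp)" by (cases c) auto
  show ?thesis
    using wr_map_high[of T q "tp h"]
    by (auto simp: c sh_def step_def split: option.splits)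
qed

lemma wr_run: "run A (wr T) n (sh c) = map_option sh (run A T n c)"
proof (induction n)
  case 0 then show ?case by simp
next
  case (Suc n) then show ?case
    by (cases "run A T n c") (simp_all add: run_Suc_last wr_step)
qed

lemma wr_step_low: "q < 5 \<Longrightarrow> map_of wpre (q, tp h) = Some (q', s, d) \<Longrightarrow>
   step A (wr T) (q, h, tp) = Some (q', if d then h + 1 else h - 1, tp(h := s))"
  by (rule step_tr) (simp_all add: wr_map_low)

lemma wr_R: "q < 5 \<Longrightarrow> map_of wpre (q, tp h) = Some (q', s, True) \<Longrightarrow> h' = h + 1 \<Longrightarrow> tp' = tp(h := s) \<Longrightarrow>
   step A (wr T) (q, h, tp) = Some (q', h', tp')"
  using wr_step_low[of q tp h q' s True A T] by simp
lemma wr_L: "q < 5 \<Longrightarrow> map_of wpre (q, tp h) = Some (q', s, False) \<Longrightarrow> h' = h - 1 \<Longrightarrow> tp' = tp(h := s) \<Longrightarrow>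
   step A (wr T) (q, h, tp) = Some (q', h', tp')"
  using wr_step_low[of q tp h q' s False A T] by simp

lemma wr_prefix:
  fixes \<sigma> L
  defines "e \<equiv> enc_str \<sigma>" and "eL \<equiv> enc_str L"
  defines "w \<equiv> teach_in \<sigma> L"
  shows "\<exists>t0. run A (wr T) t0 (init_conf w) = Some (5, 0, snd (snd (init_conf e)))"
proof -
  define n where "n = length e"
  define l where "l = length eL"
  have w: "w = e @ 4 # eL" unfolding w_def teach_in_def e_def eL_def by simp
  define tp0 where "tp0 = (\<lambda>i. if i < length w then w ! i else 0)"
  have init: "init_conf w = (0, 0, tp0)" by (simp add: init_conf_def tp0_def)
  have lw: "length w = n + 1 + l" by (simp add: w n_def l_def)
  have e_sym: "\<And>i. i < n \<Longrightarrow> e ! i \<in> {1,2,3}" unfolding n_def e_def by (rule enc_nth)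
  have eL_sym: "\<And>i. i < l \<Longrightarrow> eL ! i \<in> {1,2,3}" unfolding l_def eL_def by (rule enc_nth)
  have tp0_e: "\<And>i. i < n \<Longrightarrow> tp0 i = e ! i" by (simp add: tp0_def w n_def nth_append)
  have tp0_n: "tp0 n = 4" by (simp add: tp0_def w n_def nth_append)
  have tp0_L: "\<And>j. j < l \<Longrightarrow> tp0 (n + 1 + j) = eL ! j" by (simp add: tp0_def w n_def l_def nth_append)
  have tp0_out: "\<And>i. n + 1 + l \<le> i \<Longrightarrow> tp0 i = 0" by (simp add: tp0_def lw)
  define mk where "mk = (\<lambda>s::nat. if s = 4 then 5 else s + 5)"
  define tpA where "tpA = (\<lambda>i. if i = 0 then mk (tp0 0) else if i = n then 0 else tp0 i)"
  have phA: "\<exists>a. run A (wr T) a (0, 0, tp0) = Some (2, n + 1, tpA)"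
  proof (cases "n = 0")
    case True
    have "step A (wr T) (0, 0, tp0) = Some (2, 1, tp0(0 := 5))"
      by (rule wr_R) (use True tp0_n in \<open>simp_all add: wpre_def\<close>)
    moreover have "tp0 0 = 4" using tp0_n True by simp
    then have "tp0(0 := 5) = tpA" using True by (auto simp: tpA_def mk_def fun_eq_iff)
    ultimately have "step A (wr T) (0, 0, tp0) = Some (2, 1, tpA)" by simp
    then have "run A (wr T) 1 (0, 0, tp0) = Some (2, 1, tpA)" by (rule run_one)
    then show ?thesis using True by (intro exI[of _ 1]) simp
  next
    case False
    have s0: "tp0 0 \<in> {1,2,3}" using tp0_e[of 0] e_sym[of 0] False by simp
    have st1: "step A (wr T) (0, 0, tp0) = Some (1, 1, tp0(0 := tp0 0 + 5))"
      by (rule wr_R) (use s0 in \<open>auto simp: wpre_def\<close>)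
    have sc: "run A (wr T) (n - 1) (1, 1, tp0(0 := tp0 0 + 5)) =
       Some (1, 1 + (n - 1), \<lambda>i. if 1 \<le> i \<and> i < 1 + (n - 1) then id ((tp0(0 := tp0 0 + 5)) i) else (tp0(0 := tp0 0 + 5)) i)"
    proof (rule rscan[where S = "{1,2,3}"])
      show "1 \<noteq> qquery (wr T)" by simp
      show "\<forall>s\<in>{1,2,3}. map_of (delta (wr T)) (1, s) = Some (1, id s, True)"
        by (simp add: wr_map_low wpre_def)
      show "\<forall>i<n - 1. (tp0(0 := tp0 0 + 5)) (1 + i) \<in> {1,2,3}"
        using tp0_e e_sym by auto
    qed
    have sc': "run A (wr T) (n - 1) (1, 1, tp0(0 := tp0 0 + 5)) = Some (1, n, tp0(0 := tp0 0 + 5))"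
      using sc False by (simp add: fun_eq_iff)
    have st2: "step A (wr T) (1, n, tp0(0 := tp0 0 + 5)) = Some (2, n + 1, (tp0(0 := tp0 0 + 5))(n := 0))"
      by (rule wr_R) (use False tp0_n in \<open>simp_all add: wpre_def\<close>)
    have eq: "(tp0(0 := tp0 0 + 5))(n := 0) = tpA"
      using False s0 by (auto simp: tpA_def mk_def fun_eq_iff)
    have "run A (wr T) (1 + (n - 1) + 1) (0, 0, tp0) = Some (2, n + 1, tpA)"
      using run_trans[OF run_trans[OF run_one[OF st1] sc'] run_one[OF st2]] eq by simp
    then show ?thesis by blast
  qed
  then obtain a where a: "run A (wr T) a (0, 0, tp0) = Some (2, n + 1, tpA)" by blast
  define tpB where "tpB = (\<lambda>i. if n + 1 \<le> i \<and> i < n + 1 + l then 0 else tpA i)"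
  have scB: "run A (wr T) l (2, n + 1, tpA) =
     Some (2, n + 1 + l, \<lambda>i. if n + 1 \<le> i \<and> i < n + 1 + l then (\<lambda>_. 0) (tpA i) else tpA i)"
  proof (rule rscan[where S = "{1,2,3}"])
    show "2 \<noteq> qquery (wr T)" by simp
    show "\<forall>s\<in>{1,2,3}. map_of (delta (wr T)) (2, s) = Some (2, (\<lambda>_. 0) s, True)"
      by (simp add: wr_map_low wpre_def)
    show "\<forall>i<l. tpA (n + 1 + i) \<in> {1,2,3}"
      using tp0_L eL_sym by (auto simp: tpA_def)
  qed
  have scB': "run A (wr T) l (2, n + 1, tpA) = Some (2, n + 1 + l, tpB)"
    using scB by (simp add: tpB_def)
  have tpB_end: "tpB (n + 1 + l) = 0" using tp0_out[of "n+1+l"] by (simp add: tpB_def tpA_def)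
  have stB: "step A (wr T) (2, n + 1 + l, tpB) = Some (3, n + l, tpB)"
    by (rule wr_L) (use tpB_end in \<open>auto simp: wpre_def\<close>)
  have scC: "run A (wr T) (n + l) (3, 0 + (n + l), tpB) =
     Some (3, 0, \<lambda>i. if 0 < i \<and> i \<le> 0 + (n + l) then id (tpB i) else tpB i)"
  proof (rule lscan[where S = "{0,1,2,3}"])
    show "3 \<noteq> qquery (wr T)" by simp
    show "\<forall>s\<in>{0,1,2,3}. map_of (delta (wr T)) (3, s) = Some (3, id s, False)"
      by (simp add: wr_map_low wpre_def)
    show "\<forall>i. 0 < i \<and> i \<le> 0 + (n + l) \<longrightarrow> tpB i \<in> {0,1,2,3}"
    proof (intro allI impI)
      fix i assume i: "0 < i \<and> i \<le> 0 + (n + l)"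
      show "tpB i \<in> {0,1,2,3}"
      proof (cases "i < n")
        case True then show ?thesis using i tp0_e[of i] e_sym[of i] by (auto simp: tpB_def tpA_def)
      next
        case False then show ?thesis using i by (auto simp: tpB_def tpA_def)
      qed
    qed
  qed
  have scC': "run A (wr T) (n + l) (3, n + l, tpB) = Some (3, 0, tpB)"
    using scC by (simp add: fun_eq_iff)
  define tpF where "tpF = snd (snd (init_conf e))"
  have tpF: "tpF = (\<lambda>i. if i < n then e ! i else 0)" by (simp add: tpF_def init_conf_def n_def)
  have tpB0: "tpB 0 = mk (tp0 0)" by (simp add: tpB_def tpA_def)
  have stD: "step A (wr T) (3, 0, tpB) = Some (4, 1, tpB(0 := tpF 0))"
  proof (cases "n = 0")
    case True
    then show ?thesis
      by (intro wr_R) (use tpB0 tp0_n True in \<open>simp_all add: wpre_def mk_def tpF\<close>)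
  next
    case False
    have s0: "tp0 0 \<in> {1,2,3}" using tp0_e[of 0] e_sym[of 0] False by simp
    then show ?thesis using False tp0_e[of 0]
      by (intro wr_R) (auto simp: wpre_def mk_def tpF tpB0)
  qed
  have tpB1: "tpB 1 \<in> {0,1,2,3}"
  proof (cases "1 < n")
    case True then show ?thesis using tp0_e[of 1] e_sym[of 1] by (auto simp: tpB_def tpA_def)
  next
    case False then show ?thesis using tp0_out[of 1] by (auto simp: tpB_def tpA_def)
  qed
  have stE: "step A (wr T) (4, 1, tpB(0 := tpF 0)) = Some (5, 0, (tpB(0 := tpF 0))(1 := tpB 1))"
    by (intro wr_L) (use tpB1 in \<open>auto simp: wpre_def\<close>)
  have fin: "(tpB(0 := tpF 0))(1 := tpB 1) = tpF"
  proof
    fix i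
    show "((tpB(0 := tpF 0))(1 := tpB 1)) i = tpF i"
    proof (cases "i = 0")
      case True then show ?thesis by simp
    next
      case False
      then show ?thesis
      proof (cases "i < n")
        case True then show ?thesis using False tp0_e[of i] by (auto simp: tpB_def tpA_def tpF)
      next
        case nn: False
        show ?thesis
        proof (cases "n + 1 + l \<le> i")
          case True then show ?thesis using False nn tp0_out[of i] by (auto simp: tpB_def tpA_def tpF)
        next
          case False then show ?thesis using \<open>i \<noteq> 0\<close> nn by (auto simp: tpB_def tpA_def tpF)
        qed
      qed
    qed
  qed
  have "run A (wr T) (a + l + 1 + (n + l) + 1 + 1) (init_conf w) = Some (5, 0, tpF)"
    using run_trans[OF run_trans[OF run_trans[OF run_trans[OF run_trans[OF a scB'] run_one[OF stB]] scC'] run_one[OF stD]] run_one[OF stE]]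
      fin init by simp
  then show ?thesis unfolding tpF_def by blast
qed




lemma init_sh: "(5, 0, snd (snd (init_conf w))) = sh (init_conf w)"
  by (simp add: init_conf_def sh_def)

lemma wr_computes:
  assumes "computes_str T (enc_str \<sigma>) \<tau>"
  shows "computes_str (wr T) (teach_in \<sigma> L) \<tau>"
proof -
  from assms obtain t c where h: "halts_with {} T (enc_str \<sigma>) t c" "tape_is (enc_str \<tau>) (snd (snd c))"
    unfolding computes_str_def by blast
  from wr_prefix[of "{}" T \<sigma> L] obtain t0 where
    t0: "run {} (wr T) t0 (init_conf (teach_in \<sigma> L)) = Some (sh (init_conf (enc_str \<sigma>)))"
    unfolding init_sh by blast
  have r: "run {} T t (init_conf (enc_str \<sigma>)) = Some c" and s: "step {} T c = None"
    using h(1) unfolding halts_with_def by blast+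
  have "run {} (wr T) t (sh (init_conf (enc_str \<sigma>))) = Some (sh c)"
    by (simp add: wr_run r)
  then have "run {} (wr T) (t0 + t) (init_conf (teach_in \<sigma> L)) = Some (sh c)"
    by (rule run_trans[OF t0])
  moreover have "step {} (wr T) (sh c) = None" by (simp add: wr_step s)
  ultimately have "halts_with {} (wr T) (teach_in \<sigma> L) (t0 + t) (sh c)"
    by (simp add: halts_with_def)
  moreover have "snd (snd (sh c)) = snd (snd c)" by (simp add: sh_def split: prod.splits)
  ultimately show ?thesis using h(2) unfolding computes_str_def by metis
qed

lemma wr_teacher:
  assumes "teacher T"
  shows "teacherO (wr T)" "str_out (wr T) (teach_in \<sigma> L) = str_out T (enc_str \<sigma>)"
proof -
  have so: "\<And>\<sigma> L. str_out (wr T) (teach_in \<sigma> L) = str_out T (enc_str \<sigma>)"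
  proof -
    fix \<sigma> L
    from assms obtain \<tau> where c: "computes_str T (enc_str \<sigma>) \<tau>" unfolding teacher_def by blast
    have "str_out T (enc_str \<sigma>) = \<tau>" by (rule str_out_eq[OF c])
    moreover have "str_out (wr T) (teach_in \<sigma> L) = \<tau>" by (rule str_out_eq[OF wr_computes[OF c]])
    ultimately show "str_out (wr T) (teach_in \<sigma> L) = str_out T (enc_str \<sigma>)" by simp
  qed
  show "str_out (wr T) (teach_in \<sigma> L) = str_out T (enc_str \<sigma>)" by (rule so)
  show "teacherO (wr T)"
    unfolding teacherO_def
  proof (intro conjI allI impI)
    fix \<sigma> L
    from assms obtain \<tau> where c: "computes_str T (enc_str \<sigma>) \<tau>" unfolding teacher_def by blast
    show "\<exists>\<tau>. computes_str (wr T) (teach_in \<sigma> L) \<tau>" using wr_computes[OF c] by blast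
  next
    fix \<sigma> \<sigma>' L L' :: "nat list"
    assume "prefix \<sigma> \<sigma>'"
    then show "prefix (str_out (wr T) (teach_in \<sigma> L)) (str_out (wr T) (teach_in \<sigma>' L'))"
      using assms unfolding so teacher_def by blast
  next
    fix \<sigma> L
    show "set (str_out (wr T) (teach_in \<sigma> L)) \<subseteq> set \<sigma>"
      using assms unfolding so teacher_def by blast
  qed
qed

definition T0 :: tm where "T0 = \<lparr>delta = [], qquery = 1, qyes = 2, qno = 3\<rparr>"

lemma T0_computes: "computes_str T0 (enc_str \<sigma>) \<sigma>"
proof -
  have "halts_with {} T0 (enc_str \<sigma>) 0 (init_conf (enc_str \<sigma>))"
    by (simp add: halts_with_def init_conf_def step_def T0_def)
  moreover have "tape_is (enc_str \<sigma>) (snd (snd (init_conf (enc_str \<sigma>))))"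
    by (simp add: tape_is_def init_conf_def)
  ultimately show ?thesis unfolding computes_str_def by blast
qed

lemma T0_out: "str_out T0 (enc_str \<sigma>) = \<sigma>"
  by (rule str_out_eq[OF T0_computes])

lemma T0_teacher: "teacher T0"
  unfolding teacher_def T0_out using T0_computes by blast

lemma prt_conv_all: "prt_conv F A p res \<Longrightarrow> res n \<noteq> None"
  unfolding prt_conv_def by (metis nle_le)

lemma lresult_len: "lresult A M \<sigma> = Some (h, t, qs) \<Longrightarrow> length qs \<le> t"
  using lresult_Some[of A M \<sigma> "(h, t, qs)"] length_queries by auto

lemma prt_conv_transfer:
  assumes pc: "prt_conv F A p res"
    and tr: "\<And>n h t qs. res n = Some (h, t, qs) \<Longrightarrow> \<exists>t' qs'. t' \<le> 2 * t \<and> length qs' \<le> t' \<and> res' n = Some (h, t', qs')"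
  shows "prt_conv F A (smult 2 p) res'"
proof -
  from pc obtain i where i: "\<forall>j\<le>i. res j \<noteq> None"
     "\<forall>j\<ge>i. res j \<noteq> None \<and> fst (the (res j)) = fst (the (res i))"
     "F (fst (the (res i))) = A"
     "(\<Sum>j\<le>i. fst (snd (the (res j)))) < poly p (mi F A)"
    unfolding prt_conv_def by blast
  have all: "\<And>j. res j \<noteq> None" using prt_conv_all[OF pc] .
  have key: "\<And>j. res' j \<noteq> None \<and> fst (the (res' j)) = fst (the (res j)) \<and>
      fst (snd (the (res' j))) \<le> 2 * fst (snd (the (res j))) \<and>
      length (snd (snd (the (res' j)))) \<le> fst (snd (the (res' j)))"
  proof -
    fix j
    obtain h t qs where r: "res j = Some (h, t, qs)" using all[of j] by (cases "res j") auto
    from tr[OF r] obtain t' qs' where "t' \<le> 2 * t" "length qs' \<le> t'" "res' j = Some (h, t', qs')" by blast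
    then show "?thesis j" using r by simp
  qed
  have s1: "(\<Sum>j\<le>i. fst (snd (the (res' j)))) \<le> (\<Sum>j\<le>i. 2 * fst (snd (the (res j))))"
    by (rule sum_mono) (use key in blast)
  also have "\<dots> = 2 * (\<Sum>j\<le>i. fst (snd (the (res j))))" by (simp add: sum_distrib_left)
  finally have s1': "(\<Sum>j\<le>i. fst (snd (the (res' j)))) < poly (smult 2 p) (mi F A)"
    using i(4) by simp
  have s2: "(\<Sum>j\<le>i. length (snd (snd (the (res' j))))) \<le> (\<Sum>j\<le>i. fst (snd (the (res' j))))"
    by (rule sum_mono) (use key in blast)
  show ?thesis unfolding prt_conv_def
  proof (intro exI[of _ i] conjI)
    show "\<forall>j\<le>i. res' j \<noteq> None" using key by blast
    show "\<forall>j\<ge>i. res' j \<noteq> None \<and> fst (the (res' j)) = fst (the (res' i))" using key i(2) by metis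
    show "F (fst (the (res' i))) = A" using key i(3) by metis
    show "(\<Sum>j\<le>i. fst (snd (the (res' j)))) < poly (smult 2 p) (mi F A)" by (rule s1')
    show "(\<Sum>j\<le>i. length (snd (snd (the (res' j))))) \<le> poly (smult 2 p) (mi F A)"
      using s2 s1' by linarith
  qed
qed

lemma dq_transfer:
  assumes "prt_conv F A p (\<lambda>n. lresult {} M (g n))"
  shows "prt_conv F A (smult 2 p) (\<lambda>n. lresult A (dq M) (g n))"
proof (rule prt_conv_transfer[OF assms])
  fix n h t qs assume "lresult {} M (g n) = Some (h, t, qs)"
  from dq_lresult[OF this, of A] obtain t' qs' where "t' \<le> 2 * t" "lresult A (dq M) (g n) = Some (h, t', qs')"
    by blast
  with lresult_len[OF this(2)] show "\<exists>t' qs'. t' \<le> 2 * t \<and> length qs' \<le> t' \<and> lresult A (dq M) (g n) = Some (h, t', qs')"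
    by blast
qed

lemma tolog_some:
  assumes "teacher T" "\<And>n. lresult A M (str_out T (enc_str (prefix_of f n))) \<noteq> None"
  shows "tolog M (wr T) A f n \<noteq> None"
proof (induction n)
  case 0 then show ?case by simp
next
  case (Suc n)
  then obtain L where L: "tolog M (wr T) A f n = Some L" by blast
  obtain r where r: "lresult A M (str_out T (enc_str (prefix_of f n))) = Some r" using assms(2)[of n] by blast
  show ?case using L r wr_teacher(2)[OF assms(1)] by (cases r) auto
qed

lemma to_res_eq:
  assumes "teacher T" "\<And>n. lresult A M (str_out T (enc_str (prefix_of f n))) \<noteq> None"
  shows "to_res M (wr T) A f n = lresult A M (str_out T (enc_str (prefix_of f n)))"
proof -
  obtain L where "tolog M (wr T) A f n = Some L" using tolog_some[OF assms] by blast
  then show ?thesis using wr_teacher(2)[OF assms(1)] by (simp add: to_res_def)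
qed

lemma prt_conv_cong: "prt_conv F A p res \<Longrightarrow> (\<And>n. res' n = res n) \<Longrightarrow> prt_conv F A p res'"
proof -
  assume "prt_conv F A p res" "\<And>n. res' n = res n"
  then have "res' = res" by blast
  with \<open>prt_conv F A p res\<close> show ?thesis by simp
qed

lemma PRT_sub_O: "PRT \<subseteq> PRT_O"
proof
  fix F assume "F \<in> PRT"
  then obtain M p where ix: "indexed_family F" and c: "\<forall>A\<in>range F. \<forall>f. is_enum f A \<longrightarrow>
            prt_conv F A p (\<lambda>n. lresult {} M (prefix_of f n))" unfolding PRT_def by blast
  have "\<forall>A\<in>range F. \<forall>f. is_enum f A \<longrightarrow> prt_conv F A (smult 2 p) (\<lambda>n. lresult A (dq M) (prefix_of f n))"
    using dq_transfer c by blast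
  then show "F \<in> PRT_O" using ix unfolding PRT_O_def by blast
qed

lemma PRT_sub_T: "PRT \<subseteq> PRT_T"
proof
  fix F assume "F \<in> PRT"
  then obtain M p where ix: "indexed_family F" and c: "\<forall>A\<in>range F. \<forall>f. is_enum f A \<longrightarrow>
            prt_conv F A p (\<lambda>n. lresult {} M (prefix_of f n))" unfolding PRT_def by blast
  then have "\<forall>A\<in>range F. \<forall>f. is_enum f A \<longrightarrow> prt_conv F A p (\<lambda>n. lresult {} M (str_out T0 (enc_str (prefix_of f n))))"
    by (simp add: T0_out)
  then show "F \<in> PRT_T" using ix T0_teacher unfolding PRT_T_def by blast
qed

lemma PRT_O_sub_TO: "PRT_O \<subseteq> PRT_TO"
proof
  fix F assume "F \<in> PRT_O"
  then obtain M p where ix: "indexed_family F" and c: "\<forall>A\<in>range F. \<forall>f. is_enum f A \<longrightarrow>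
            prt_conv F A p (\<lambda>n. lresult A M (prefix_of f n))" unfolding PRT_O_def by blast
  have "\<forall>A\<in>range F. \<forall>f. is_enum f A \<longrightarrow> prt_conv F A p (to_res M (wr T0) A f)"
  proof (intro ballI allI impI)
    fix A f assume "A \<in> range F" "is_enum f A"
    with c have pc: "prt_conv F A p (\<lambda>n. lresult A M (prefix_of f n))" by blast
    have ne: "\<And>n. lresult A M (str_out T0 (enc_str (prefix_of f n))) \<noteq> None"
      using prt_conv_all[OF pc] by (simp add: T0_out)
    show "prt_conv F A p (to_res M (wr T0) A f)"
      by (rule prt_conv_cong[OF pc]) (simp add: to_res_eq[OF T0_teacher ne] T0_out)
  qed
  then show "F \<in> PRT_TO" using ix wr_teacher(1)[OF T0_teacher] unfolding PRT_TO_def by blast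
qed

lemma PRT_T_sub_TO: "PRT_T \<subseteq> PRT_TO"
proof
  fix F assume "F \<in> PRT_T"
  then obtain M T p where ix: "indexed_family F" and te: "teacher T" and c: "\<forall>A\<in>range F. \<forall>f. is_enum f A \<longrightarrow>
            prt_conv F A p (\<lambda>n. lresult {} M (str_out T (enc_str (prefix_of f n))))" unfolding PRT_T_def by blast
  have "\<forall>A\<in>range F. \<forall>f. is_enum f A \<longrightarrow> prt_conv F A (smult 2 p) (to_res (dq M) (wr T) A f)"
  proof (intro ballI allI impI)
    fix A f assume "A \<in> range F" "is_enum f A"
    with c have pc: "prt_conv F A p (\<lambda>n. lresult {} M (str_out T (enc_str (prefix_of f n))))" by blast
    have pc2: "prt_conv F A (smult 2 p) (\<lambda>n. lresult A (dq M) (str_out T (enc_str (prefix_of f n))))"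
      by (rule dq_transfer[OF pc])
    have ne: "\<And>n. lresult A (dq M) (str_out T (enc_str (prefix_of f n))) \<noteq> None"
      using prt_conv_all[OF pc2] by simp
    show "prt_conv F A (smult 2 p) (to_res (dq M) (wr T) A f)"
      by (rule prt_conv_cong[OF pc2]) (simp add: to_res_eq[OF te ne])
  qed
  then show "F \<in> PRT_TO" using ix wr_teacher(1)[OF te] unfolding PRT_TO_def by blast
qed




definition A0 :: "nat set" where "A0 = {x. even (length (bits x))}"
definition A1 :: "nat set" where "A1 = {x. odd (length (bits x))}"
definition G :: "nat \<Rightarrow> nat set" where "G n = (if even n then A0 else A1)"

lemma A0_ne_A1: "A0 \<noteq> A1"
proof
  assume "A0 = A1"
  moreover have "0 \<in> A0" by (simp add: A0_def)
  moreover have "0 \<notin> A1" by (simp add: A1_def)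
  ultimately show False by simp
qed

lemma G_A0: "G h = A0 \<longleftrightarrow> even h" using A0_ne_A1 by (simp add: G_def)
lemma G_A1: "G h = A1 \<longleftrightarrow> odd h" using A0_ne_A1 by (simp add: G_def)

lemma mi_A0: "mi G A0 = 0" unfolding mi_def by (simp add: G_def)
lemma mi_A1: "mi G A1 = 1"
  unfolding mi_def
proof (rule Least_equality)
  show "G 1 = A1" by (simp add: G_def)
  fix y assume "G y = A1"
  then show "1 \<le> y" using A0_ne_A1 by (cases y) (auto simp: G_def)
qed

lemma loc_run:
  assumes ag: "\<forall>i<N. tp1 i = tp2 i"
  shows "k \<le> N \<Longrightarrow> run {} M k (q0, 0, tp1) = Some (q, h, u1) \<Longrightarrow>
          \<exists>u2. run {} M k (q0, 0, tp2) = Some (q, h, u2) \<and> h \<le> k \<and> (\<forall>i<N. u1 i = u2 i)"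
proof (induction k arbitrary: q h u1)
  case 0 then show ?case using ag by simp
next
  case (Suc k)
  from Suc.prems(2) have b: "Option.bind (run {} M k (q0, 0, tp1)) (step {} M) = Some (q, h, u1)"
    by (simp only: run_Suc_last)
  then obtain c where c: "run {} M k (q0, 0, tp1) = Some c" "step {} M c = Some (q, h, u1)"
    by (cases "run {} M k (q0, 0, tp1)") auto
  obtain qa ha ua where ca: "c = (qa, ha, ua)" by (cases c) auto
  from Suc.IH[of qa ha ua] Suc.prems(1) c(1) ca obtain u2 where
    u2: "run {} M k (q0, 0, tp2) = Some (qa, ha, u2)" "ha \<le> k" "\<forall>i<N. ua i = u2 i" by auto
  have hN: "ha < N" using u2(2) Suc.prems(1) by simp
  have sym: "ua ha = u2 ha" using u2(3) hN by simp
  have "\<exists>u2'. step {} M (qa, ha, u2) = Some (q, h, u2') \<and> h \<le> Suc k \<and> (\<forall>i<N. u1 i = u2' i)"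
  proof (cases "qa = qquery M")
    case True
    then show ?thesis using c(2) ca u2 by (auto simp: step_def)
  next
    case False
    then obtain q' s d where mo: "map_of (delta M) (qa, ua ha) = Some (q', s, d)"
      and e: "(q, h, u1) = (q', if d then ha + 1 else ha - 1, ua(ha := s))"
      using c(2) ca by (auto simp: step_def split: option.splits)
    have "step {} M (qa, ha, u2) = Some (q', if d then ha + 1 else ha - 1, u2(ha := s))"
      using False mo sym by (simp add: step_def)
    then show ?thesis using e u2(2,3) by auto
  qed
  then obtain u2' where "step {} M (qa, ha, u2) = Some (q, h, u2')" "h \<le> Suc k" "\<forall>i<N. u1 i = u2' i" by blast
  then show ?case using u2(1) by (auto simp: run_Suc_last)
qed

lemma loc_halt:
  assumes "step {} M (q, h, u1) = None" "h < N" "\<forall>i<N. u1 i = u2 i"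
  shows "step {} M (q, h, u2) = None"
proof -
  have "u1 h = u2 h" using assms by simp
  then show ?thesis using assms(1) by (auto simp: step_def split: if_splits option.splits)
qed

definition tape_of :: "nat list \<Rightarrow> nat \<Rightarrow> nat" where
  "tape_of w = (\<lambda>i. if i < length w then w ! i else 0)"

lemma init_tape: "init_conf w = (0, 0, tape_of w)" by (simp add: init_conf_def tape_of_def)

lemma parity_cell: "tape_is (enc_str [h]) u \<Longrightarrow> (u 0 = 2 \<longleftrightarrow> odd h)"
proof -
  assume a: "tape_is (enc_str [h]) u"
  show ?thesis
  proof (cases "h = 0")
    case True
    then have "u 0 = 3" using a by (simp add: tape_is_def enc_str_single)
    then show ?thesis using True by simp
  next
    case False
    then have "u 0 = h mod 2 + 1" using a by (simp add: tape_is_def enc_str_single bits_nz)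
    then show ?thesis by (simp add: odd_iff_mod_2_eq_one)
  qed
qed

lemma loc_lresult:
  assumes r1: "lresult {} M \<sigma>1 = Some (h1, t, qs1)" and r2: "lresult {} M \<sigma>2 = Some (h2, t2, qs2)"
    and tN: "t < N" and ag: "\<forall>i<N. tape_of (enc_str \<sigma>1) i = tape_of (enc_str \<sigma>2) i"
  shows "even h1 = even h2"
proof -
  from lresult_Some[OF r1] obtain c1 where c1: "halts_with {} M (enc_str \<sigma>1) t c1"
    "tape_is (enc_str [h1]) (snd (snd c1))" by auto
  from lresult_Some[OF r2] obtain c2 where c2: "halts_with {} M (enc_str \<sigma>2) t2 c2"
    "tape_is (enc_str [h2]) (snd (snd c2))" by auto
  obtain q h u1 where cc: "c1 = (q, h, u1)" by (cases c1) auto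
  have run1: "run {} M t (0, 0, tape_of (enc_str \<sigma>1)) = Some (q, h, u1)" and
    st1: "step {} M (q, h, u1) = None"
    using c1(1) cc by (auto simp: halts_with_def init_tape)
  from loc_run[OF ag _ run1] tN obtain u2 where
    u2: "run {} M t (0, 0, tape_of (enc_str \<sigma>2)) = Some (q, h, u2)" "h \<le> t" "\<forall>i<N. u1 i = u2 i" by auto
  have "step {} M (q, h, u2) = None" using loc_halt[OF st1 _ u2(3)] u2(2) tN by simp
  then have "halts_with {} M (enc_str \<sigma>2) t (q, h, u2)" using u2(1) by (simp add: halts_with_def init_tape)
  from halts_det[OF this c2(1)] have "c2 = (q, h, u2)" by simp
  then have "u2 0 = 2 \<longleftrightarrow> odd h2" using parity_cell c2(2) by simp
  moreover have "u1 0 = 2 \<longleftrightarrow> odd h1" using parity_cell c1(2) cc by simp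
  moreover have "u1 0 = u2 0" using u2(3) tN by simp
  ultimately show ?thesis by simp
qed

lemma tape_is_self: "tape_is w (tape_of w)" by (simp add: tape_is_def tape_of_def)

lemma steps_pos:
  assumes "lresult A M \<sigma> = Some (h, t, qs)" "length \<sigma> \<noteq> 1"
  shows "1 \<le> t"
proof (rule ccontr)
  assume "\<not> 1 \<le> t"
  then have t0: "t = 0" by simp
  from lresult_Some[OF assms(1)] obtain c where c: "halts_with A M (enc_str \<sigma>) t c"
    "tape_is (enc_str [h]) (snd (snd c))" by auto
  then have "c = init_conf (enc_str \<sigma>)" using t0 by (simp add: halts_with_def)
  then have "tape_is (enc_str [h]) (tape_of (enc_str \<sigma>))" using c(2) by (simp add: init_tape)
  then have "[h] = \<sigma>" using tape_is_enc_unique tape_is_self by blast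
  then show False using assms(2) by auto
qed

lemma sum_lower:
  fixes a :: "nat \<Rightarrow> nat"
  shows "(\<forall>j\<le>i. j \<noteq> 1 \<longrightarrow> 1 \<le> a j) \<Longrightarrow> i \<le> (\<Sum>j\<le>i. a j)"
proof (induction i)
  case 0 then show ?case by simp
next
  case (Suc i)
  show ?case
  proof (cases "i = 0")
    case True
    then have "1 \<le> a 0" using Suc.prems by simp
    then show ?thesis using True by simp
  next
    case False
    then have "i \<le> (\<Sum>j\<le>i. a j)" using Suc by simp
    moreover have "Suc i \<noteq> 1" using False by simp
    then have "1 \<le> a (Suc i)" using Suc.prems by blast
    ultimately show ?thesis by simp
  qed
qed

lemma bits_pow2: "bits (2 ^ k) = replicate k 1 @ [2]"
proof (induction k)
  case 0 then show ?case by (simp add: bits_nz)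
next
  case (Suc k)
  have "(2::nat) ^ Suc k \<noteq> 0" by simp
  then have "bits (2 ^ Suc k) = (2 ^ Suc k mod 2 + 1) # bits (2 ^ Suc k div 2)" by (rule bits_nz)
  then show ?case using Suc by simp
qed

lemma prefix_rep: "(\<forall>m<K. f m = x) \<Longrightarrow> j \<le> K \<Longrightarrow> prefix_of f j = replicate j x"
  unfolding prefix_of_def by (intro nth_equalityI) auto

lemma enc_rep: "enc_str (replicate (Suc j) x) = bits x @ 3 # enc_str (replicate j x)"
  by (simp add: enc_str_Cons)

lemma tape_rep: "i < length (bits x) \<Longrightarrow> 0 < j \<Longrightarrow> tape_of (enc_str (replicate j x)) i = bits x ! i"
proof -
  assume a: "i < length (bits x)" "0 < j"
  then obtain j' where j: "j = Suc j'" by (cases j) auto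
  show ?thesis unfolding j enc_rep using a by (simp add: tape_of_def nth_append)
qed

lemma bits_pow2_nth: "i < k \<Longrightarrow> bits (2 ^ k) ! i = 1" "length (bits ((2::nat) ^ k)) = Suc k"
  by (simp_all add: bits_pow2 nth_append)

lemma agree_rep:
  assumes "N < k"
  shows "\<forall>i<N. tape_of (enc_str (replicate j ((2::nat) ^ k))) i = tape_of (enc_str (replicate j ((2::nat) ^ Suc k))) i"
proof (cases j)
  case 0 then show ?thesis by simp
next
  case (Suc j')
  show ?thesis
  proof (intro allI impI)
    fix i assume i: "i < N"
    have "tape_of (enc_str (replicate j ((2::nat) ^ k))) i = 1"
      using tape_rep[of i "2 ^ k" j] bits_pow2_nth(1)[of i k] bits_pow2_nth(2)[of k] i assms Suc by simp
    moreover have "tape_of (enc_str (replicate j ((2::nat) ^ Suc k))) i = 1"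
      using tape_rep[of i "2 ^ Suc k" j] bits_pow2_nth(1)[of i "Suc k"] bits_pow2_nth(2)[of "Suc k"] i assms Suc by simp
    ultimately show "tape_of (enc_str (replicate j (2 ^ k))) i = tape_of (enc_str (replicate j (2 ^ Suc k))) i"
      by simp
  qed
qed




lemma length_prefix_of[simp]: "length (prefix_of f j) = j" by (simp add: prefix_of_def)

lemma conv_ex:
  assumes pc: "prt_conv F A p (\<lambda>n. lresult B M (prefix_of f n))"
  shows "\<exists>i h t qs. i < poly p (mi F A) \<and> F h = A \<and> (\<forall>j\<ge>i. \<exists>t qs. lresult B M (prefix_of f j) = Some (h, t, qs))
     \<and> lresult B M (prefix_of f i) = Some (h, t, qs) \<and> t < poly p (mi F A)"
proof -
  define res where "res = (\<lambda>n. lresult B M (prefix_of f n))"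
  from pc obtain i where i:
     "\<forall>j\<ge>i. res j \<noteq> None \<and> fst (the (res j)) = fst (the (res i))"
     "F (fst (the (res i))) = A"
     "(\<Sum>j\<le>i. fst (snd (the (res j)))) < poly p (mi F A)"
    unfolding prt_conv_def res_def by blast
  have all: "\<And>j. res j \<noteq> None" using prt_conv_all[OF pc] by (simp add: res_def)
  have pos: "\<forall>j\<le>i. j \<noteq> 1 \<longrightarrow> 1 \<le> fst (snd (the (res j)))"
  proof (intro allI impI)
    fix j assume "j \<le> i" "j \<noteq> 1"
    obtain h t qs where r: "res j = Some (h, t, qs)" using all[of j] by (cases "res j") auto
    have "1 \<le> t" by (rule steps_pos[of B M "prefix_of f j" h t qs]) (use r \<open>j \<noteq> 1\<close> in \<open>simp_all add: res_def\<close>)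
    then show "1 \<le> fst (snd (the (res j)))" using r by simp
  qed
  have "i \<le> (\<Sum>j\<le>i. fst (snd (the (res j))))" by (rule sum_lower[OF pos])
  then have ilt: "i < poly p (mi F A)" using i(3) by simp
  have "fst (snd (the (res i))) \<le> (\<Sum>j\<le>i. fst (snd (the (res j))))"
    by (rule member_le_sum) auto
  then have tlt: "fst (snd (the (res i))) < poly p (mi F A)" using i(3) by simp
  obtain h t qs where ri: "res i = Some (h, t, qs)" using all[of i] by (cases "res i") auto
  have later: "\<forall>j\<ge>i. \<exists>t qs. res j = Some (h, t, qs)"
  proof (intro allI impI)
    fix j assume "i \<le> j"
    then have "fst (the (res j)) = h" using i(1) ri by simp
    moreover obtain h' t' qs' where "res j = Some (h', t', qs')" using all[of j] by (cases "res j") auto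
    ultimately show "\<exists>t qs. res j = Some (h, t, qs)" by simp
  qed
  show ?thesis
    using ilt tlt later ri i(2) unfolding res_def by (intro exI[of _ i] exI[of _ h] exI[of _ t] exI[of _ qs]) simp
qed

lemma G_not_PRT: "G \<notin> PRT"
proof
  assume "G \<in> PRT"
  then obtain M p where c: "\<forall>A\<in>range G. \<forall>f. is_enum f A \<longrightarrow>
            prt_conv G A p (\<lambda>n. lresult {} M (prefix_of f n))" unfolding PRT_def by blast
  define N where "N = poly p 0 + poly p 1 + 1"
  define k where "k = 2 * N"
  have Nk: "N < k" by (simp add: k_def N_def)
  have xa: "(2::nat) ^ Suc k \<in> A0" unfolding A0_def using bits_pow2_nth(2)[of "Suc k"] by (simp add: k_def del: power_Suc)
  have xb: "(2::nat) ^ k \<in> A1" by (simp add: A1_def bits_pow2_nth(2) k_def)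
  define fa where "fa = (\<lambda>m. if m < N then (2::nat) ^ Suc k else if m - N \<in> A0 then m - N else 2 ^ Suc k)"
  define fb where "fb = (\<lambda>m. if m < N then (2::nat) ^ k else if m - N \<in> A1 then m - N else 2 ^ k)"
  have ea: "is_enum fa A0" unfolding is_enum_def
  proof
    show "range fa \<subseteq> A0" using xa by (auto simp: fa_def)
    show "A0 \<subseteq> range fa"
    proof
      fix x assume "x \<in> A0"
      then have "fa (x + N) = x" by (simp add: fa_def)
      then show "x \<in> range fa" by (metis rangeI)
    qed
  qed
  have eb: "is_enum fb A1" unfolding is_enum_def
  proof
    show "range fb \<subseteq> A1" using xb by (auto simp: fb_def)
    show "A1 \<subseteq> range fb"
    proof
      fix x assume "x \<in> A1"
      then have "fb (x + N) = x" by (simp add: fb_def)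
      then show "x \<in> range fb" by (metis rangeI)
    qed
  qed
  have "G 0 = A0" by (simp add: G_def)
  then have rA0: "A0 \<in> range G" by (metis rangeI)
  have "G 1 = A1" by (simp add: G_def)
  then have rA1: "A1 \<in> range G" by (metis rangeI)
  have pa: "prt_conv G A0 p (\<lambda>n. lresult {} M (prefix_of fa n))" using c rA0 ea by blast
  have pb: "prt_conv G A1 p (\<lambda>n. lresult {} M (prefix_of fb n))" using c rA1 eb by blast
  from conv_ex[OF pa] obtain ia ha ta qsa where
    a: "ia < poly p 0" "G ha = A0" "\<forall>j\<ge>ia. \<exists>t qs. lresult {} M (prefix_of fa j) = Some (ha, t, qs)"
       "lresult {} M (prefix_of fa ia) = Some (ha, ta, qsa)" "ta < poly p 0"
    unfolding mi_A0 by blast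
  from conv_ex[OF pb] obtain ib hb tb qsb where
    b: "ib < poly p 1" "G hb = A1" "\<forall>j\<ge>ib. \<exists>t qs. lresult {} M (prefix_of fb j) = Some (hb, t, qs)"
       "lresult {} M (prefix_of fb ib) = Some (hb, tb, qsb)" "tb < poly p 1"
    unfolding mi_A1 by blast
  have eha: "even ha" using a(2) G_A0 by blast
  have ohb: "odd hb" using b(2) G_A1 by blast
  have iaN: "ia \<le> N" "ta < N" "ib \<le> N" "tb < N" using a(1,5) b(1,5) by (simp_all add: N_def)
  have pfa: "\<And>j. j \<le> N \<Longrightarrow> prefix_of fa j = replicate j (2 ^ Suc k)"
    by (rule prefix_rep[where K = N]) (simp_all add: fa_def)
  have pfb: "\<And>j. j \<le> N \<Longrightarrow> prefix_of fb j = replicate j (2 ^ k)"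
    by (rule prefix_rep[where K = N]) (simp_all add: fb_def)
  show False
  proof (cases "ib \<le> ia")
    case True
    then obtain t qs where rb: "lresult {} M (prefix_of fb ia) = Some (hb, t, qs)" using b(3) by blast
    have ag: "\<forall>i<N. tape_of (enc_str (prefix_of fa ia)) i = tape_of (enc_str (prefix_of fb ia)) i"
      using agree_rep[OF Nk, of ia] pfa[OF iaN(1)] pfb[OF iaN(1)] by simp
    have "even ha = even hb" by (rule loc_lresult[OF a(4) rb iaN(2) ag])
    then show False using eha ohb by simp
  next
    case False
    then have "ia \<le> ib" by simp
    then obtain t qs where ra: "lresult {} M (prefix_of fa ib) = Some (ha, t, qs)" using a(3) by blast
    have ag: "\<forall>i<N. tape_of (enc_str (prefix_of fb ib)) i = tape_of (enc_str (prefix_of fa ib)) i"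
      using agree_rep[OF Nk, of ib] pfa[OF iaN(3)] pfb[OF iaN(3)] by simp
    have "even hb = even ha" by (rule loc_lresult[OF b(4) ra iaN(4) ag])
    then show False using eha ohb by simp
  qed
qed




definition E :: tm where
  "E = \<lparr>delta = [((0,3),(3,3,True)), ((0,1),(1,1,True)), ((0,2),(2,2,True)),
 ((1,1),(1,1,True)), ((1,2),(1,2,True)), ((1,3),(3,3,True)),
 ((2,1),(2,1,True)), ((2,2),(2,2,True)), ((2,3),(5,3,True)),
 ((3,1),(4,1,True)), ((3,2),(4,2,True)), ((4,1),(3,1,True)), ((4,2),(3,2,True)), ((4,3),(7,3,True)),
 ((5,1),(6,1,True)), ((5,2),(6,2,True)), ((6,1),(5,1,True)), ((6,2),(5,2,True)), ((5,3),(7,3,True)),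
 ((7,0),(7,0,True))], qquery = 8, qyes = 9, qno = 10\<rparr>"

lemma E_q[simp]: "qquery E = 8" by (simp add: E_def)

lemma E_R: "q \<noteq> 8 \<Longrightarrow> map_of (delta E) (q, tp h) = Some (q', s, True) \<Longrightarrow> h' = h + 1 \<Longrightarrow> tp' = tp(h := s) \<Longrightarrow>
   step A E (q, h, tp) = Some (q', h', tp')"
  using step_tr[of q E tp h q' s True A] by simp

lemma bits_sym: "i < length (bits n) \<Longrightarrow> bits n ! i \<in> {1,2}"
  using set_bits[of n] nth_mem[of i "bits n"] by blast

lemma bits_hd: "n \<noteq> 0 \<Longrightarrow> bits n ! 0 = n mod 2 + 1" by (simp add: bits_nz)
lemma bits_len_pos: "n \<noteq> 0 \<Longrightarrow> 0 < length (bits n)" by (simp add: bits_nz)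

lemma loop_run:
  assumes "\<forall>i\<ge>p. tp i = 0"
  shows "run A E k (7, p, tp) = Some (7, p + k, tp)"
proof -
  have "run A E k (7, p, tp) = Some (7, p + k, \<lambda>i. if p \<le> i \<and> i < p + k then id (tp i) else tp i)"
    by (rule rscan[where S = "{0}"]) (use assms in \<open>simp_all add: E_def\<close>)
  then show ?thesis by (simp add: fun_eq_iff)
qed

lemma loop_step:
  assumes "\<forall>i\<ge>p. tp i = 0"
  shows "step A E (7, p, tp) \<noteq> None"
  using assms by (simp add: step_def E_def)

lemma E_main:
  fixes n x :: nat
  defines "w \<equiv> enc_str [n, x]"
  shows "(\<exists>t c. halts_with {} E w t c) \<longleftrightarrow> (even n \<longleftrightarrow> even (length (bits x)))"
proof -
  define ln where "ln = length (bits n)"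
  define lx where "lx = length (bits x)"
  define tp where "tp = tape_of w"
  have w: "w = bits n @ 3 # bits x @ [3]" by (simp add: w_def enc_str_Cons)
  have lw: "length w = ln + 1 + lx + 1" by (simp add: w ln_def lx_def)
  have tn: "\<And>i. i < ln \<Longrightarrow> tp i = bits n ! i" by (simp add: tp_def tape_of_def w ln_def nth_append)
  have t3: "tp ln = 3" by (simp add: tp_def tape_of_def w ln_def nth_append)
  have tx: "\<And>j. j < lx \<Longrightarrow> tp (ln + 1 + j) = bits x ! j"
    by (simp add: tp_def tape_of_def w ln_def lx_def nth_append)
  have t3': "tp (ln + 1 + lx) = 3" by (simp add: tp_def tape_of_def w ln_def lx_def nth_append)
  have t0: "\<And>i. ln + 1 + lx + 1 \<le> i \<Longrightarrow> tp i = 0" by (simp add: tp_def tape_of_def lw)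
  have init: "init_conf w = (0, 0, tp)" by (simp add: init_tape tp_def)
  define e0 where "e0 = (if even n then 3 else 5 :: nat)"
  define e1 where "e1 = (if even n then 4 else 6 :: nat)"
  have ph1: "\<exists>t1. run {} E t1 (0, 0, tp) = Some (e0, ln + 1, tp)"
  proof (cases "n = 0")
    case True
    then have "ln = 0" by (simp add: ln_def)
    have tu: "tp(0 := 3) = tp" using t3 \<open>ln = 0\<close> by (intro fun_upd_idem) simp
    have "step {} E (0, 0, tp) = Some (e0, ln + 1, tp(0 := 3))"
      using t3 True \<open>ln = 0\<close> by (intro E_R) (simp_all add: E_def e0_def)
    then have "step {} E (0, 0, tp) = Some (e0, ln + 1, tp)" using tu by simp
    then show ?thesis by (blast intro: run_one)
  next
    case False
    define s where "s = (if even n then 1 else 2 :: nat)"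
    have lp: "0 < ln" using bits_len_pos[OF False] by (simp add: ln_def)
    have c0: "tp 0 = n mod 2 + 1" using tn[OF lp] bits_hd[OF False] by simp
    have c0': "tp 0 = s" using c0 by (auto simp: s_def even_iff_mod_2_eq_zero odd_iff_mod_2_eq_one)
    have tu: "tp(0 := s) = tp" using c0' by (intro fun_upd_idem) simp
    have "step {} E (0, 0, tp) = Some (s, 1, tp(0 := s))"
      using c0' by (intro E_R) (auto simp: E_def s_def)
    then have st1: "step {} E (0, 0, tp) = Some (s, 1, tp)" using tu by simp
    have sc: "run {} E (ln - 1) (s, 1, tp) = Some (s, 1 + (ln - 1), \<lambda>i. if 1 \<le> i \<and> i < 1 + (ln - 1) then id (tp i) else tp i)"
    proof (rule rscan[where S = "{1,2}"])
      show "s \<noteq> qquery E" by (simp add: s_def)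
      show "\<forall>sa\<in>{1, 2}. map_of (delta E) (s, sa) = Some (s, id sa, True)" by (simp add: E_def s_def)
      show "\<forall>i<ln - 1. tp (1 + i) \<in> {1, 2}"
      proof (intro allI impI)
        fix i assume "i < ln - 1"
        then have "1 + i < ln" by simp
        then show "tp (1 + i) \<in> {1,2}" using tn bits_sym by (simp add: ln_def)
      qed
    qed
    have sc': "run {} E (ln - 1) (s, 1, tp) = Some (s, ln, tp)" using sc lp by (simp add: fun_eq_iff)
    have st2: "step {} E (s, ln, tp) = Some (e0, ln + 1, tp)"
      using t3 by (intro E_R) (auto simp: E_def s_def e0_def)
    show ?thesis using run_trans[OF run_trans[OF run_one[OF st1] sc'] run_one[OF st2]] by blast
  qed
  then obtain t1 where t1: "run {} E t1 (0, 0, tp) = Some (e0, ln + 1, tp)" by blast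
  have sc2: "run {} E lx (e0, ln + 1, tp) = Some (if even lx then e0 else e1, ln + 1 + lx, tp)"
  proof (rule ascan[where S = "{1,2}"])
    show "e0 \<noteq> qquery E" "e1 \<noteq> qquery E" by (simp_all add: e0_def e1_def)
    show "\<forall>s\<in>{1, 2}. map_of (delta E) (e0, s) = Some (e1, s, True)" by (simp add: E_def e0_def e1_def)
    show "\<forall>s\<in>{1, 2}. map_of (delta E) (e1, s) = Some (e0, s, True)" by (simp add: E_def e0_def e1_def)
    show "\<forall>i<lx. tp (ln + 1 + i) \<in> {1, 2}" using tx bits_sym by (simp add: lx_def)
  qed
  have reach: "run {} E (t1 + lx) (init_conf w) = Some (if even lx then e0 else e1, ln + 1 + lx, tp)"
    unfolding init using run_trans[OF t1 sc2] .
  show ?thesis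
  proof (cases "even n \<longleftrightarrow> even lx")
    case True
    have "step {} E (if even lx then e0 else e1, ln + 1 + lx, tp) = None"
      using True t3' by (auto simp: step_def E_def e0_def e1_def)
    then have "halts_with {} E w (t1 + lx) (if even lx then e0 else e1, ln + 1 + lx, tp)"
      using reach by (simp add: halts_with_def)
    then show ?thesis using True by (auto simp: lx_def)
  next
    case False
    have st: "step {} E (if even lx then e0 else e1, ln + 1 + lx, tp) = Some (7, ln + 1 + lx + 1, tp)"
      using False t3' by (intro E_R) (auto simp: E_def e0_def e1_def)
    have tz: "\<forall>i\<ge>ln + 1 + lx + 1. tp i = 0" using t0 by simp
    have r2: "\<And>k. run {} E (t1 + lx + 1 + k) (init_conf w) = Some (7, ln + 1 + lx + 1 + k, tp)"
      using run_trans[OF run_trans[OF reach run_one[OF st]] loop_run[OF tz]] by simp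
    have nh: "\<not> (\<exists>t c. halts_with {} E w t c)"
    proof
      assume "\<exists>t c. halts_with {} E w t c"
      then obtain t c where h: "halts_with {} E w t c" by blast
      then have r: "run {} E t (init_conf w) = Some c" "step {} E c = None" by (simp_all add: halts_with_def)
      show False
      proof (cases "t < t1 + lx + 1")
        case True
        from run_after_halt[OF r True] r2[of 0] show False by simp
      next
        case False
        then obtain k where k: "t = t1 + lx + 1 + k" by (metis le_add_diff_inverse not_less)
        then have "c = (7, ln + 1 + lx + 1 + k, tp)" using r(1) r2[of k] by simp
        moreover have "\<forall>i\<ge>ln + 1 + lx + 1 + k. tp i = 0" using tz by simp
        ultimately show False using loop_step r(2) by blast
      qed
    qed
    then show ?thesis using False by (simp add: lx_def)
  qed
qed

lemma G_indexed: "indexed_family G"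
  unfolding indexed_family_def
proof (intro exI[of _ E] allI)
  fix n x
  show "x \<in> G n \<longleftrightarrow> (\<exists>t c. halts_with {} E (enc_str [n, x]) t c)"
    using E_main[of n x] by (simp add: G_def A0_def A1_def)
qed




lemma prt_conv_const:
  assumes "\<forall>j. \<exists>t qs. res j = Some (h, t, qs) \<and> t \<le> c \<and> length qs \<le> t" "F h = A" "c < poly p (mi F A)"
  shows "prt_conv F A p res"
  unfolding prt_conv_def
proof (intro exI[of _ 0] conjI)
  obtain t qs where r0: "res 0 = Some (h, t, qs)" "t \<le> c" "length qs \<le> t" using assms(1) by blast
  show "\<forall>j\<le>0. res j \<noteq> None" using r0 by simp
  show "\<forall>j\<ge>0. res j \<noteq> None \<and> fst (the (res j)) = fst (the (res 0))"
  proof (intro allI impI)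
    fix j :: nat
    obtain t' qs' where "res j = Some (h, t', qs')" using assms(1) by blast
    then show "res j \<noteq> None \<and> fst (the (res j)) = fst (the (res 0))" using r0 by simp
  qed
  show "F (fst (the (res 0))) = A" using r0 assms(2) by simp
  show "(\<Sum>j\<le>0. fst (snd (the (res j)))) < poly p (mi F A)" using r0 assms(3) by simp
  show "(\<Sum>j\<le>0. length (snd (snd (the (res j))))) \<le> poly p (mi F A)" using r0 assms(3) by simp
qed

lemma prt_conv_one:
  assumes "\<exists>t qs. res 0 = Some (h0, t, qs) \<and> t \<le> c \<and> length qs \<le> t"
    "\<forall>j\<ge>1. \<exists>t qs. res j = Some (h, t, qs) \<and> t \<le> c \<and> length qs \<le> t" "F h = A" "2 * c < poly p (mi F A)"
  shows "prt_conv F A p res"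
  unfolding prt_conv_def
proof (intro exI[of _ 1] conjI)
  obtain t0 qs0 where r0: "res 0 = Some (h0, t0, qs0)" "t0 \<le> c" "length qs0 \<le> t0" using assms(1) by blast
  obtain t1 qs1 where r1: "res 1 = Some (h, t1, qs1)" "t1 \<le> c" "length qs1 \<le> t1" using assms(2) by blast
  have le1: "\<And>j. j \<le> 1 \<Longrightarrow> j = 0 \<or> j = (1::nat)" by auto
  show "\<forall>j\<le>1. res j \<noteq> None" using r0 r1 le1 by blast
  show "\<forall>j\<ge>1. res j \<noteq> None \<and> fst (the (res j)) = fst (the (res 1))"
  proof (intro allI impI)
    fix j :: nat assume "1 \<le> j"
    then obtain t' qs' where "res j = Some (h, t', qs')" using assms(2) by blast
    then show "res j \<noteq> None \<and> fst (the (res j)) = fst (the (res 1))" using r1 by simp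
  qed
  show "F (fst (the (res 1))) = A" using r1 assms(3) by simp
  have sm: "\<And>g :: nat \<Rightarrow> nat. (\<Sum>j\<le>1. g j) = g 0 + g 1" by (simp add: atMost_Suc)
  show "(\<Sum>j\<le>1. fst (snd (the (res j)))) < poly p (mi F A)" using r0 r1 assms(4) by (simp add: sm)
  show "(\<Sum>j\<le>1. length (snd (snd (the (res j))))) \<le> poly p (mi F A)" using r0 r1 assms(4) by (simp add: sm)
qed

definition LO :: tm where
  "LO = \<lparr>delta = map (\<lambda>s. ((0,s),(1,2,True))) [0..<4] @ map (\<lambda>s. ((1,s),(2,3,True))) [0..<4]
       @ map (\<lambda>s. ((2,s),(3,0,False))) [0..<4] @ [((3,3),(4,3,False)), ((6,2),(7,3,True)), ((7,3),(8,0,False))],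
     qquery = 4, qyes = 5, qno = 6\<rparr>"

lemma LO_f[simp]: "qquery LO = 4" "qyes LO = 5" "qno LO = 6" by (simp_all add: LO_def)

lemma LO_map: "map_of (delta LO) (q, s) = (if q = 0 \<and> s < 4 then Some (1,2,True) else if q = 1 \<and> s < 4 then Some (2,3,True)
   else if q = 2 \<and> s < 4 then Some (3,0,False) else map_of [((3,3),(4,3,False)), ((6,2),(7,3,True)), ((7,3),(8,0,False))] (q, s))"
  by (simp add: LO_def map_add_def map_of_row split: option.splits)

lemma tape_small: "tape_of (enc_str \<sigma>) i < 4"
proof (cases "i < length (enc_str \<sigma>)")
  case True then show ?thesis using enc_nth[OF True] by (auto simp: tape_of_def)
qed (simp add: tape_of_def)

lemma LO_result: "lresult A LO \<sigma> = Some (if 1 \<in> A then 1 else 0, if 1 \<in> A then 5 else 7, queries A LO (enc_str \<sigma>) (if 1 \<in> A then 5 else 7))"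
proof -
  define tp where "tp = tape_of (enc_str \<sigma>)"
  have sm: "\<And>i. tp i < 4" by (simp add: tp_def tape_small)
  define tp4 where "tp4 = ((tp(0 := 2))(1 := 3))(2 := 0)"
  have s1: "step A LO (0, 0, tp) = Some (1, 1, tp(0 := 2))"
    using step_tr[of 0 LO tp 0 1 2 True A] sm[of 0] by (simp add: LO_map)
  have s2: "step A LO (1, 1, tp(0 := 2)) = Some (2, 2, (tp(0 := 2))(1 := 3))"
    using step_tr[of 1 LO "tp(0 := 2)" 1 2 3 True A] sm[of 1] by (simp add: LO_map)
  have s3: "step A LO (2, 2, (tp(0 := 2))(1 := 3)) = Some (3, 1, tp4)"
    using step_tr[of 2 LO "(tp(0 := 2))(1 := 3)" 2 3 0 False A] sm[of 2] by (simp add: LO_map tp4_def)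
  have s4: "step A LO (3, 1, tp4) = Some (4, 0, tp4)"
    using step_tr[of 3 LO tp4 1 4 3 False A] by (simp add: LO_map tp4_def fun_upd_twist)
  have na: "num_at tp4 0 = 1"
  proof -
    have l: "(LEAST k. tp4 (0 + k) \<notin> {1, 2}) = 1"
    proof (rule Least_equality)
      show "tp4 (0 + 1) \<notin> {1, 2}" by (simp add: tp4_def)
      fix y assume "tp4 (0 + y) \<notin> {1, 2}"
      then show "1 \<le> y" by (cases y) (auto simp: tp4_def)
    qed
    show ?thesis unfolding num_at_def Let_def l by (simp add: tp4_def)
  qed
  have s5: "step A LO (4, 0, tp4) = Some (if 1 \<in> A then 5 else 6, 0, tp4)"
    using na by (simp add: step_def)
  have init: "init_conf (enc_str \<sigma>) = (0, 0, tp)" by (simp add: tp_def init_tape)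
  have r4: "run A LO 5 (init_conf (enc_str \<sigma>)) = Some (if 1 \<in> A then 5 else 6, 0, tp4)"
    unfolding init using s1 s2 s3 s4 s5 by (simp add: run_step numeral_eq_Suc)
  show ?thesis
  proof (cases "1 \<in> A")
    case True
    have h: "halts_with A LO (enc_str \<sigma>) 5 (5, 0, tp4)"
      using r4 True by (simp add: halts_with_def step_def LO_map tp4_def)
    have "tape_is (enc_str [1]) tp4" by (simp add: tape_is_def enc_str_single bits_nz tp4_def nth_Cons')
    then show ?thesis using lresult_eq[OF h] True by simp
  next
    case False
    define tp6 where "tp6 = (tp4(0 := 3))(1 := 0)"
    have s6: "step A LO (6, 0, tp4) = Some (7, 1, tp4(0 := 3))"
      using step_tr[of 6 LO tp4 0 7 3 True A] by (simp add: LO_map tp4_def)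
    have s7: "step A LO (7, 1, tp4(0 := 3)) = Some (8, 0, tp6)"
      using step_tr[of 7 LO "tp4(0 := 3)" 1 8 0 False A] by (simp add: LO_map tp4_def tp6_def)
    have r4': "run A LO 5 (init_conf (enc_str \<sigma>)) = Some (6, 0, tp4)" using r4 False by simp
    have r7: "run A LO 7 (init_conf (enc_str \<sigma>)) = Some (8, 0, tp6)"
      using run_trans[OF r4' run_trans[OF run_one[OF s6] run_one[OF s7]]] by simp
    have h: "halts_with A LO (enc_str \<sigma>) 7 (8, 0, tp6)"
      using r7 by (simp add: halts_with_def step_def LO_map)
    have "tape_is (enc_str [0]) tp6" by (simp add: tape_is_def enc_str_single tp6_def tp4_def)
    then show ?thesis using lresult_eq[OF h] False by simp
  qed
qed

lemma one_A1: "1 \<in> A1" by (simp add: A1_def bits_nz)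
lemma one_A0: "1 \<notin> A0" by (simp add: A0_def bits_nz)

lemma G_PRT_O: "G \<in> PRT_O"
  unfolding PRT_O_def
proof (intro CollectI conjI exI[of _ LO] exI[of _ "[:8:]"] ballI allI impI)
  show "indexed_family G" by (rule G_indexed)
  fix A f assume "A \<in> range G" "is_enum f A"
  then have AA: "A = A0 \<or> A = A1" by (auto simp: G_def)
  define h where "h = (if 1 \<in> A then 1 else 0 :: nat)"
  have Gh: "G h = A" using AA one_A0 one_A1 by (auto simp: h_def G_def)
  show "prt_conv G A [:8:] (\<lambda>n. lresult A LO (prefix_of f n))"
  proof (rule prt_conv_const[where h = h and c = 7])
    show "\<forall>j. \<exists>t qs. lresult A LO (prefix_of f j) = Some (h, t, qs) \<and> t \<le> 7 \<and> length qs \<le> t"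
    proof
      fix j
      have r: "lresult A LO (prefix_of f j) = Some (h, if 1 \<in> A then 5 else 7, queries A LO (enc_str (prefix_of f j)) (if 1 \<in> A then 5 else 7))"
        using LO_result by (simp add: h_def)
      show "\<exists>t qs. lresult A LO (prefix_of f j) = Some (h, t, qs) \<and> t \<le> 7 \<and> length qs \<le> t"
        using r lresult_len[OF r] by auto
    qed
    show "G h = A" by (rule Gh)
    show "7 < poly [:8:] (mi G A)" by simp
  qed
qed




definition tf :: "nat list \<Rightarrow> nat list" where
  "tf \<sigma> = (case \<sigma> of [] \<Rightarrow> [] | x # _ \<Rightarrow> if even (length (bits x)) then [x] else [])"

definition TTrows :: "((nat \<times> nat) \<times> (nat \<times> nat \<times> bool)) list" where
  "TTrows = [((0,3),(9,3,True)), ((0,1),(1,5,True)), ((0,2),(1,6,True)),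
   ((1,1),(2,1,True)), ((1,2),(2,2,True)), ((2,1),(1,1,True)), ((2,2),(1,2,True)),
   ((1,3),(3,3,False)), ((3,1),(3,1,False)), ((3,2),(3,2,False)), ((3,5),(4,0,True)), ((3,6),(4,0,True)),
   ((2,3),(5,3,True)), ((6,3),(7,3,False)),
   ((7,1),(7,1,False)), ((7,2),(7,2,False)), ((7,5),(8,1,True)), ((7,6),(8,2,True))]"

definition TT :: tm where
  "TT = \<lparr>delta = map (\<lambda>s. ((9,s),(10,0,True))) [0..<4] @ map (\<lambda>s. ((5,s),(6,0,False))) [0..<4] @ TTrows,
     qquery = 20, qyes = 21, qno = 22\<rparr>"

lemma TT_q[simp]: "qquery TT = 20" by (simp add: TT_def)

lemma TT_map: "map_of (delta TT) (q, s) = (if q = 9 \<and> s < 4 then Some (10, 0, True) else if q = 5 \<and> s < 4 then Some (6, 0, False)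
   else map_of TTrows (q, s))"
  by (simp add: TT_def map_add_def map_of_row split: option.splits)

lemma TT_R: "q \<noteq> 20 \<Longrightarrow> map_of (delta TT) (q, tp h) = Some (q', s, True) \<Longrightarrow> h' = h + 1 \<Longrightarrow> tp' = tp(h := s) \<Longrightarrow>
   step A TT (q, h, tp) = Some (q', h', tp')"
  using step_tr[of q TT tp h q' s True A] by simp
lemma TT_L: "q \<noteq> 20 \<Longrightarrow> map_of (delta TT) (q, tp h) = Some (q', s, False) \<Longrightarrow> h' = h - 1 \<Longrightarrow> tp' = tp(h := s) \<Longrightarrow>
   step A TT (q, h, tp) = Some (q', h', tp')"
  using step_tr[of q TT tp h q' s False A] by simp

lemma TT_computes: "computes_str TT (enc_str \<sigma>) (tf \<sigma>)"
proof (cases \<sigma>)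
  case Nil
  have "halts_with {} TT (enc_str \<sigma>) 0 (init_conf (enc_str \<sigma>))"
    using Nil by (simp add: halts_with_def init_conf_def step_def TT_map TTrows_def)
  moreover have "tape_is (enc_str (tf \<sigma>)) (snd (snd (init_conf (enc_str \<sigma>))))"
    using Nil by (simp add: tape_is_def init_conf_def tf_def)
  ultimately show ?thesis unfolding computes_str_def by blast
next
  case (Cons x r)
  define tp where "tp = tape_of (enc_str \<sigma>)"
  define len where "len = length (bits x)"
  have enc: "enc_str \<sigma> = bits x @ 3 # enc_str r" by (simp add: Cons enc_str_Cons)
  have tb: "\<And>i. i < len \<Longrightarrow> tp i = bits x ! i" by (simp add: tp_def tape_of_def enc len_def nth_append)
  have t3: "tp len = 3" by (simp add: tp_def tape_of_def enc len_def nth_append)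
  have sm: "\<And>i. tp i < 4" by (simp add: tp_def tape_small)
  have init: "init_conf (enc_str \<sigma>) = (0, 0, tp)" by (simp add: tp_def init_tape)
  show ?thesis
  proof (cases "x = 0")
    case True
    then have l0: "len = 0" by (simp add: len_def)
    have c0: "tp 0 = 3" using t3 l0 by simp
    have tu: "tp(0 := 3) = tp" using c0 by (intro fun_upd_idem) simp
    have s1: "step {} TT (0, 0, tp) = Some (9, 1, tp)"
      using TT_R[of 0 tp 0 9 3 1 "tp(0:=3)" "{}"] c0 tu by (simp add: TT_map TTrows_def)
    have s2: "step {} TT (9, 1, tp) = Some (10, 2, tp(1 := 0))"
      using TT_R[of 9 tp 1 10 0 2 "tp(1:=0)" "{}"] sm[of 1] by (simp add: TT_map)
    have h: "halts_with {} TT (enc_str \<sigma>) 2 (10, 2, tp(1 := 0))"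
      using s1 s2 init by (simp add: halts_with_def run_step numeral_eq_Suc step_def TT_map TTrows_def)
    have "tape_is (enc_str (tf \<sigma>)) (tp(1 := 0))"
      using Cons True c0 by (simp add: tf_def tape_is_def enc_str_single)
    then show ?thesis using h unfolding computes_str_def by auto
  next
    case False
    have lp: "0 < len" using bits_len_pos[OF False] by (simp add: len_def)
    have b0: "tp 0 \<in> {1,2}" using tb[OF lp] bits_sym[of 0 x] lp by (simp add: len_def)
    define tp1 where "tp1 = tp(0 := tp 0 + 4)"
    have s1: "step {} TT (0, 0, tp) = Some (1, 1, tp1)"
      using b0 by (intro TT_R) (auto simp: TT_map TTrows_def tp1_def)
    have mid: "\<And>i. 0 < i \<Longrightarrow> i < len \<Longrightarrow> tp1 i \<in> {1,2}"
      using tb bits_sym by (simp add: tp1_def len_def)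
    have sc: "run {} TT (len - 1) (1, 1, tp1) = Some (if even (len - 1) then 1 else 2, 1 + (len - 1), tp1)"
    proof (rule ascan[where S = "{1,2}"])
      show "(1::nat) \<noteq> qquery TT" "(2::nat) \<noteq> qquery TT" by simp_all
      show "\<forall>s\<in>{1, 2}. map_of (delta TT) (1, s) = Some (2, s, True)" by (simp add: TT_map TTrows_def)
      show "\<forall>s\<in>{1, 2}. map_of (delta TT) (2, s) = Some (1, s, True)" by (simp add: TT_map TTrows_def)
      show "\<forall>i<len - 1. tp1 (1 + i) \<in> {1, 2}" using mid by simp
    qed
    have t13: "tp1 len = 3" using t3 lp by (simp add: tp1_def)
    show ?thesis
    proof (cases "even len")
      case False
      then have sc': "run {} TT (len - 1) (1, 1, tp1) = Some (1, len, tp1)" using sc lp by simp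
      have tu: "tp1(len := 3) = tp1" using t13 by (intro fun_upd_idem) simp
      have s2: "step {} TT (1, len, tp1) = Some (3, 0 + (len - 1), tp1)"
        using TT_L[of 1 tp1 len 3 3 "0 + (len - 1)" tp1 "{}"] t13 tu lp by (simp add: TT_map TTrows_def)
      have sc2: "run {} TT (len - 1) (3, 0 + (len - 1), tp1) =
          Some (3, 0, \<lambda>i. if 0 < i \<and> i \<le> 0 + (len - 1) then id (tp1 i) else tp1 i)"
      proof (rule lscan[where S = "{1,2}"])
        show "(3::nat) \<noteq> qquery TT" by simp
        show "\<forall>s\<in>{1, 2}. map_of (delta TT) (3, s) = Some (3, id s, False)" by (simp add: TT_map TTrows_def)
        show "\<forall>i. 0 < i \<and> i \<le> 0 + (len - 1) \<longrightarrow> tp1 i \<in> {1, 2}"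
        proof (intro allI impI)
          fix i assume "0 < i \<and> i \<le> 0 + (len - 1)"
          then have "0 < i" "i < len" using lp by auto
          then show "tp1 i \<in> {1,2}" by (rule mid)
        qed
      qed
      have sc2': "run {} TT (len - 1) (3, 0 + (len - 1), tp1) = Some (3, 0, tp1)"
        using sc2 by (simp add: fun_eq_iff)
      have s3: "step {} TT (3, 0, tp1) = Some (4, 1, tp1(0 := 0))"
        using b0 by (intro TT_R) (auto simp: TT_map TTrows_def tp1_def)
      have r: "run {} TT (1 + (len - 1) + 1 + (len - 1) + 1) (init_conf (enc_str \<sigma>)) = Some (4, 1, tp1(0 := 0))"
        unfolding init using run_trans[OF run_trans[OF run_trans[OF run_trans[OF run_one[OF s1] sc'] run_one[OF s2]] sc2'] run_one[OF s3]] .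
      have st: "step {} TT (4, 1, tp1(0 := 0)) = None"
        by (simp add: step_def TT_map TTrows_def)
      have "tape_is (enc_str (tf \<sigma>)) (tp1(0 := 0))"
        using Cons False by (simp add: tf_def tape_is_def len_def)
      then show ?thesis unfolding computes_str_def halts_with_def using r st
        by (intro exI[where x = "1 + (len - 1) + 1 + (len - 1) + 1"] exI[where x = "(4, 1, tp1(0 := 0))"]) simp
    next
      case True
      then have "len \<noteq> 1" by auto
      then have l2: "2 \<le> len" using lp by linarith
      have sc': "run {} TT (len - 1) (1, 1, tp1) = Some (2, len, tp1)" using sc lp True by simp
      have tu: "tp1(len := 3) = tp1" using t13 by (intro fun_upd_idem) simp
      have s2: "step {} TT (2, len, tp1) = Some (5, len + 1, tp1)"
        using TT_R[of 2 tp1 len 5 3 "len + 1" tp1 "{}"] t13 tu by (simp add: TT_map TTrows_def)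
      define tp2 where "tp2 = tp1(len + 1 := 0)"
      have s3: "step {} TT (5, len + 1, tp1) = Some (6, len, tp2)"
        using TT_L[of 5 tp1 "len + 1" 6 0 len tp2 "{}"] sm[of "len + 1"] lp
        by (simp add: TT_map tp2_def tp1_def)
      have t23: "tp2 len = 3" using t13 by (simp add: tp2_def)
      have tu2: "tp2(len := 3) = tp2" using t23 by (intro fun_upd_idem) simp
      have s4: "step {} TT (6, len, tp2) = Some (7, 0 + (len - 1), tp2)"
        using TT_L[of 6 tp2 len 7 3 "0 + (len - 1)" tp2 "{}"] t23 tu2 lp by (simp add: TT_map TTrows_def)
      have sc2: "run {} TT (len - 1) (7, 0 + (len - 1), tp2) =
          Some (7, 0, \<lambda>i. if 0 < i \<and> i \<le> 0 + (len - 1) then id (tp2 i) else tp2 i)"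
      proof (rule lscan[where S = "{1,2}"])
        show "(7::nat) \<noteq> qquery TT" by simp
        show "\<forall>s\<in>{1, 2}. map_of (delta TT) (7, s) = Some (7, id s, False)" by (simp add: TT_map TTrows_def)
        show "\<forall>i. 0 < i \<and> i \<le> 0 + (len - 1) \<longrightarrow> tp2 i \<in> {1, 2}"
        proof (intro allI impI)
          fix i assume "0 < i \<and> i \<le> 0 + (len - 1)"
          then have "0 < i" "i < len" using lp by auto
          then have "tp1 i \<in> {1,2}" by (rule mid)
          then show "tp2 i \<in> {1,2}" using \<open>i < len\<close> by (simp add: tp2_def)
        qed
      qed
      have sc2': "run {} TT (len - 1) (7, 0 + (len - 1), tp2) = Some (7, 0, tp2)"
        using sc2 by (simp add: fun_eq_iff)
      have s5: "step {} TT (7, 0, tp2) = Some (8, 1, tp2(0 := tp 0))"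
        using b0 lp by (intro TT_R) (auto simp: TT_map TTrows_def tp1_def tp2_def)
      have r: "run {} TT (1 + (len - 1) + 1 + 1 + 1 + (len - 1) + 1) (init_conf (enc_str \<sigma>)) = Some (8, 1, tp2(0 := tp 0))"
        unfolding init using run_trans[OF run_trans[OF run_trans[OF run_trans[OF run_trans[OF run_trans[OF run_one[OF s1] sc'] run_one[OF s2]] run_one[OF s3]] run_one[OF s4]] sc2'] run_one[OF s5]] .
      have st: "step {} TT (8, 1, tp2(0 := tp 0)) = None"
        by (simp add: step_def TT_map TTrows_def)
      have "tape_is (bits x @ [3]) (tp2(0 := tp 0))"
        unfolding tape_is_def
      proof (intro conjI allI impI)
        fix i assume i: "i < length (bits x @ [3])"
        show "(tp2(0 := tp 0)) i = (bits x @ [3]) ! i"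
        proof (cases "i < len")
          case True then show ?thesis using tb[OF True] lp by (auto simp: tp2_def tp1_def nth_append len_def)
        next
          case False then have "i = len" using i by (simp add: len_def)
          then show ?thesis using t3 lp by (simp add: tp2_def tp1_def nth_append len_def)
        qed
      next
        show "(tp2(0 := tp 0)) (length (bits x @ [3])) = 0" by (simp add: tp2_def len_def)
      qed
      moreover have "enc_str (tf \<sigma>) = bits x @ [3]"
        using Cons True by (simp add: tf_def len_def enc_str_single)
      ultimately show ?thesis unfolding computes_str_def halts_with_def using r st
        by (intro exI[where x = "1 + (len - 1) + 1 + 1 + 1 + (len - 1) + 1"] exI[where x = "(8, 1, tp2(0 := tp 0))"]) simp
    qed
  qed
qed

lemma TT_out: "str_out TT (enc_str \<sigma>) = tf \<sigma>"
  by (rule str_out_eq[OF TT_computes])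

lemma TT_teacher: "teacher TT"
  unfolding teacher_def TT_out
proof (intro conjI allI impI)
  fix \<sigma> show "\<exists>\<tau>. computes_str TT (enc_str \<sigma>) \<tau>" using TT_computes by blast
next
  fix \<sigma> \<sigma>' :: "nat list" assume "prefix \<sigma> \<sigma>'"
  then show "prefix (tf \<sigma>) (tf \<sigma>')"
    by (cases \<sigma>) (auto simp: tf_def prefix_def)
next
  fix \<sigma> show "set (tf \<sigma>) \<subseteq> set \<sigma>" by (cases \<sigma>) (auto simp: tf_def)
qed




definition LT :: tm where
  "LT = \<lparr>delta = map (\<lambda>s. ((1,s),(2,3,True))) [0..<4] @ map (\<lambda>s. ((2,s),(3,0,True))) [0..<4]
      @ map (\<lambda>s. ((4,s),(3,0,True))) [0..<4] @ [((0,0),(1,2,True)), ((0,1),(4,3,True)), ((0,2),(4,3,True)), ((0,3),(4,3,True))],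
    qquery = 9, qyes = 10, qno = 11\<rparr>"

lemma LT_q[simp]: "qquery LT = 9" by (simp add: LT_def)

lemma LT_map: "map_of (delta LT) (q, s) = (if q = 1 \<and> s < 4 then Some (2,3,True) else if q = 2 \<and> s < 4 then Some (3,0,True)
   else if q = 4 \<and> s < 4 then Some (3,0,True) else map_of [((0,0),(1,2,True)), ((0,1),(4,3,True)), ((0,2),(4,3,True)), ((0,3),(4,3,True))] (q, s))"
  by (simp add: LT_def map_add_def map_of_row split: option.splits)

lemma LT_result: "lresult {} LT \<tau> = Some (if \<tau> = [] then 1 else 0, if \<tau> = [] then 3 else 2,
   queries {} LT (enc_str \<tau>) (if \<tau> = [] then 3 else 2))"
proof -
  define tp where "tp = tape_of (enc_str \<tau>)"
  have sm: "\<And>i. tp i < 4" by (simp add: tp_def tape_small)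
  have init: "init_conf (enc_str \<tau>) = (0, 0, tp)" by (simp add: tp_def init_tape)
  show ?thesis
  proof (cases "\<tau> = []")
    case True
    then have z: "\<And>i. tp i = 0" by (simp add: tp_def tape_of_def)
    define tp3 where "tp3 = ((tp(0 := 2))(1 := 3))(2 := 0)"
    have s1: "step {} LT (0, 0, tp) = Some (1, 1, tp(0 := 2))"
      using step_tr[of 0 LT tp 0 1 2 True "{}"] z[of 0] by (simp add: LT_map)
    have s2: "step {} LT (1, 1, tp(0 := 2)) = Some (2, 2, (tp(0 := 2))(1 := 3))"
      using step_tr[of 1 LT "tp(0 := 2)" 1 2 3 True "{}"] sm[of 1] by (simp add: LT_map)
    have s3: "step {} LT (2, 2, (tp(0 := 2))(1 := 3)) = Some (3, 3, tp3)"
      using step_tr[of 2 LT "(tp(0 := 2))(1 := 3)" 2 3 0 True "{}"] sm[of 2] by (simp add: LT_map tp3_def)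
    have r: "run {} LT 3 (init_conf (enc_str \<tau>)) = Some (3, 3, tp3)"
      unfolding init using s1 s2 s3 by (simp add: run_step numeral_eq_Suc)
    have h: "halts_with {} LT (enc_str \<tau>) 3 (3, 3, tp3)"
      using r by (simp add: halts_with_def step_def LT_map)
    have "tape_is (enc_str [1]) tp3" by (simp add: tape_is_def enc_str_single bits_nz tp3_def nth_Cons')
    then show ?thesis using lresult_eq[OF h] True by simp
  next
    case False
    then have lp: "0 < length (enc_str \<tau>)" by (cases \<tau>) (auto simp: enc_str_Cons)
    have c0: "tp 0 \<in> {1,2,3}" using enc_nth[OF lp] lp by (simp add: tp_def tape_of_def)
    define tp2 where "tp2 = (tp(0 := 3))(1 := 0)"
    have s1: "step {} LT (0, 0, tp) = Some (4, 1, tp(0 := 3))"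
      using step_tr[of 0 LT tp 0 4 3 True "{}"] c0 by (auto simp: LT_map)
    have s2: "step {} LT (4, 1, tp(0 := 3)) = Some (3, 2, tp2)"
      using step_tr[of 4 LT "tp(0 := 3)" 1 3 0 True "{}"] sm[of 1] by (simp add: LT_map tp2_def)
    have r: "run {} LT 2 (init_conf (enc_str \<tau>)) = Some (3, 2, tp2)"
      unfolding init using s1 s2 by (simp add: run_step numeral_eq_Suc)
    have h: "halts_with {} LT (enc_str \<tau>) 2 (3, 2, tp2)"
      using r by (simp add: halts_with_def step_def LT_map)
    have "tape_is (enc_str [0]) tp2" by (simp add: tape_is_def enc_str_single tp2_def)
    then show ?thesis using lresult_eq[OF h] False by simp
  qed
qed

lemma LT_res: "\<exists>t qs. lresult {} LT \<tau> = Some (if \<tau> = [] then 1 else 0, t, qs) \<and> t \<le> 3 \<and> length qs \<le> t"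
proof -
  have r: "lresult {} LT \<tau> = Some (if \<tau> = [] then 1 else 0, if \<tau> = [] then 3 else 2,
   queries {} LT (enc_str \<tau>) (if \<tau> = [] then 3 else 2))" by (rule LT_result)
  show ?thesis using r lresult_len[OF r] by (intro exI conjI) auto
qed

lemma prefix_Cons: "1 \<le> j \<Longrightarrow> \<exists>r. prefix_of f j = f 0 # r"
proof -
  assume "1 \<le> j"
  then have "[0..<j] = 0 # [Suc 0..<j]" using upt_conv_Cons[of 0 j] by simp
  then show ?thesis by (simp add: prefix_of_def)
qed

lemma G_PRT_T_main: "\<forall>A\<in>range G. \<forall>f. is_enum f A \<longrightarrow>
            prt_conv G A [:7:] (\<lambda>n. lresult {} LT (str_out TT (enc_str (prefix_of f n))))"
proof (intro ballI allI impI)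
  fix A f assume "A \<in> range G" "is_enum f A"
  then have AA: "A = A0 \<or> A = A1" and f0: "f 0 \<in> A" by (auto simp: G_def is_enum_def)
  have r: "\<And>j. \<exists>t qs. lresult {} LT (str_out TT (enc_str (prefix_of f j))) =
      Some (if tf (prefix_of f j) = [] then 1 else 0, t, qs) \<and> t \<le> 3 \<and> length qs \<le> t"
    using LT_res by (simp add: TT_out)
  have tf0: "tf (prefix_of f 0) = []" by (simp add: tf_def prefix_of_def)
  show "prt_conv G A [:7:] (\<lambda>n. lresult {} LT (str_out TT (enc_str (prefix_of f n))))"
  proof (cases "A = A0")
    case True
    have ev: "even (length (bits (f 0)))" using f0 True by (simp add: A0_def)
    have tfj: "\<And>j. 1 \<le> j \<Longrightarrow> tf (prefix_of f j) \<noteq> []"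
    proof -
      fix j :: nat assume "1 \<le> j"
      then obtain r where "prefix_of f j = f 0 # r" using prefix_Cons by blast
      then show "tf (prefix_of f j) \<noteq> []" using ev by (simp add: tf_def)
    qed
    have a0: "\<exists>t qs. lresult {} LT (str_out TT (enc_str (prefix_of f 0))) = Some (1, t, qs) \<and> t \<le> 3 \<and> length qs \<le> t"
        using r[of 0] tf0 by simp
    have a1: "\<forall>j\<ge>1. \<exists>t qs. lresult {} LT (str_out TT (enc_str (prefix_of f j))) = Some (0, t, qs) \<and> t \<le> 3 \<and> length qs \<le> t"
    proof (intro allI impI)
      fix j :: nat assume j: "1 \<le> j"
      show "\<exists>t qs. lresult {} LT (str_out TT (enc_str (prefix_of f j))) = Some (0, t, qs) \<and> t \<le> 3 \<and> length qs \<le> t"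
        using r[of j] tfj[OF j] by simp
    qed
    have g: "G 0 = A" using True by (simp add: G_def)
    show ?thesis
      by (rule prt_conv_one[where res = "\<lambda>n. lresult {} LT (str_out TT (enc_str (prefix_of f n)))" and F = G and h = 0 and h0 = 1 and c = 3 and A = A and p = "[:7:]", OF a0 a1 g]) simp
  next
    case False
    then have A1: "A = A1" using AA by simp
    have od: "odd (length (bits (f 0)))" using f0 A1 by (simp add: A1_def)
    have tfj: "\<And>j. tf (prefix_of f j) = []"
    proof -
      fix j :: nat
      show "tf (prefix_of f j) = []"
      proof (cases "j = 0")
        case True then show ?thesis using tf0 by simp
      next
        case False
        then obtain r where "prefix_of f j = f 0 # r" using prefix_Cons[of j f] by auto
        then show ?thesis using od by (simp add: tf_def)
      qed
    qed
    show ?thesis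
    proof (rule prt_conv_const[where h = 1 and c = 3])
      show "\<forall>j. \<exists>t qs. lresult {} LT (str_out TT (enc_str (prefix_of f j))) = Some (1, t, qs) \<and> t \<le> 3 \<and> length qs \<le> t"
        using r tfj by simp
      show "G 1 = A" using A1 by (simp add: G_def)
      show "3 < poly [:7:] (mi G A)" by simp
    qed
  qed
qed

lemma G_PRT_T: "G \<in> PRT_T"
  unfolding PRT_T_def using G_indexed TT_teacher G_PRT_T_main by blast

theorem proposition3p5:
  shows "PRT \<subset> PRT_O \<and> PRT_O \<subseteq> PRT_TO \<and> PRT \<subset> PRT_T \<and> PRT_T \<subseteq> PRT_TO"
proof (intro conjI)
  show "PRT \<subset> PRT_O" using PRT_sub_O G_PRT_O G_not_PRT by blast
  show "PRT_O \<subseteq> PRT_TO" by (rule PRT_O_sub_TO)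
  show "PRT \<subset> PRT_T" using PRT_sub_T G_PRT_T G_not_PRT by blast
  show "PRT_T \<subseteq> PRT_TO" by (rule PRT_T_sub_TO)
qed


end
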